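(* Let $G=(V,E)$ with weight $\mu$ be an infinite, connected, locally finite weighted graph satisfying condition $(p_0)$, let $m>1$, and fix $o\in V$. Let $(p,q)\in G_1=\{(p,q): p\ge 0,\ m-1-p<q<m\}$. Suppose there exist constants $C>0$ and $n_1$ such that $$W_o(n)\le C\, n^{\frac{mp+q}{p+q-m+1}}(\ln n)^{\frac{m-1}{p+q-m+1}}\quad\text{for all } n\ge n_1.$$ Then the inequality $\Delta_m u+u^p|\nabla u|^q\le 0$ on $V$ admits no nontrivial positive solution.
   Context: Setting: $G=(V,E)$ is an infinite, connected, locally finite graph with no loops and no multiple edges; $x\sim y$ means $x$ and $y$ are joined by an edge. A weight is a symmetric function $\mu:V\times V\to[0,\infty)$ with $\mu_{xy}=\mu_{yx}>0$ if and only if $x\sim y$; the vertex measure is $\mu(x)=\sum_{y\sim x}\mu_{xy}$. For $m>1$ and $u:V\to\mathbb R$, $\Delta_m u(x)=\frac{1}{\mu(x)}\sum_{y\sim x}\mu_{xy}|u(y)-u(x)|^{m-2}(u(y)-u(x))$ and $|\nabla u(x)|=\big(\sum_{y\sim x}\frac{\mu_{xy}}{2\mu(x)}(u(y)-u(x))^2\big)^{1/2}$. Condition $(p_0)$: there is a constant $p_0>1$ such that $\mu_{xy}/\mu(x)\ge 1/p_0$ for all $x\sim y$. $d(x,y)$ is the graph (shortest path) distance, $B(o,n)=\{x\in V: d(o,x)\le n\}$, and $W_o(n)=\sum_{x\in B(o,n),\,y\in V,\,d(o,x)<d(o,y)}\mu_{xy}$. A nontrivial positive solution of $\Delta_m u+u^p|\nabla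 u|^q\le 0$ is a non-constant function $u:V\to(0,\infty)$ such that $\Delta_m u(x)+u(x)^p|\nabla u(x)|^q\le 0$ for every $x\in V$, with the conventions $0^0=1$, $0^q=0$ for $q>0$, and, for $q<0$, $|\nabla u(x)|^q=+\infty$ when $|\nabla u(x)|=0$ (so the inequality fails at such $x$). *)

theory Defs
  imports "HOL-Analysis.Analysis"
begin

text \<open>A weighted graph on the vertex type 'v is given by its weight function mu;
  x ~ y iff mu x y > 0.\<close>

definition adj :: "('v \<Rightarrow> 'v \<Rightarrow> real) \<Rightarrow> 'v \<Rightarrow> 'v \<Rightarrow> bool" where
  "adj mu x y \<longleftrightarrow> mu x y > 0"

definition nbrs :: "('v \<Rightarrow> 'v \<Rightarrow> real) \<Rightarrow> 'v \<Rightarrow> 'v set" where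
  "nbrs mu x = {y. adj mu x y}"

definition edge_rel :: "('v \<Rightarrow> 'v \<Rightarrow> real) \<Rightarrow> ('v \<times> 'v) set" where
  "edge_rel mu = {(x, y). adj mu x y}"

definition weighted_graph :: "('v \<Rightarrow> 'v \<Rightarrow> real) \<Rightarrow> bool" where
  "weighted_graph mu \<longleftrightarrow>
     infinite (UNIV :: 'v set) \<and>
     (\<forall>x y. mu x y = mu y x) \<and>
     (\<forall>x y. mu x y \<ge> 0) \<and>
     (\<forall>x. mu x x = 0) \<and>
     (\<forall>x. finite (nbrs mu x)) \<and>
     (\<forall>x y. (x, y) \<in> (edge_rel mu)\<^sup>*)"

definition vmeasure :: "('v \<Rightarrow> 'v \<Rightarrow> real) \<Rightarrow> 'v \<Rightarrow> real" where
  "vmeasure mu x = (\<Sum>y\<in>nbrs mu x. mu x y)"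

definition cond_p0 :: "('v \<Rightarrow> 'v \<Rightarrow> real) \<Rightarrow> bool" where
  "cond_p0 mu \<longleftrightarrow> (\<exists>p0::real. p0 > 1 \<and>
     (\<forall>x y. adj mu x y \<longrightarrow> mu x y / vmeasure mu x \<ge> 1 / p0))"

definition gdist :: "('v \<Rightarrow> 'v \<Rightarrow> real) \<Rightarrow> 'v \<Rightarrow> 'v \<Rightarrow> nat" where
  "gdist mu x y = (LEAST n. (x, y) \<in> edge_rel mu ^^ n)"

definition gball :: "('v \<Rightarrow> 'v \<Rightarrow> real) \<Rightarrow> 'v \<Rightarrow> nat \<Rightarrow> 'v set" where
  "gball mu x0 n = {x. gdist mu x0 x \<le> n}"

text \<open>W_o(n) = sum of mu_xy over x in B(o,n), y in V with d(o,x) < d(o,y).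
  Only neighbours y of x contribute (mu_xy = 0 otherwise).\<close>
definition W :: "('v \<Rightarrow> 'v \<Rightarrow> real) \<Rightarrow> 'v \<Rightarrow> nat \<Rightarrow> real" where
  "W mu x0 n = (\<Sum>(x, y)\<in>{(x, y). x \<in> gball mu x0 n \<and> adj mu x y \<and> gdist mu x0 x < gdist mu x0 y}. mu x y)"

definition mlap :: "('v \<Rightarrow> 'v \<Rightarrow> real) \<Rightarrow> real \<Rightarrow> ('v \<Rightarrow> real) \<Rightarrow> 'v \<Rightarrow> real" where
  "mlap mu m u x = (1 / vmeasure mu x) *
     (\<Sum>y\<in>nbrs mu x. mu x y * \<bar>u y - u x\<bar> powr (m - 2) * (u y - u x))"

definition grad :: "('v \<Rightarrow> 'v \<Rightarrow> real) \<Rightarrow> ('v \<Rightarrow> real) \<Rightarrow> 'v \<Rightarrow> real" where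
  "grad mu u x = sqrt (\<Sum>y\<in>nbrs mu x. mu x y / (2 * vmeasure mu x) * (u y - u x)\<^sup>2)"

text \<open>|grad u x|^q with conventions 0^0 = 1, 0^q = 0 for q > 0; for q < 0 and zero
  gradient the inequality is required to fail (handled in the predicate below).\<close>
definition gradpow :: "('v \<Rightarrow> 'v \<Rightarrow> real) \<Rightarrow> real \<Rightarrow> ('v \<Rightarrow> real) \<Rightarrow> 'v \<Rightarrow> real" where
  "gradpow mu q u x = (if q = 0 then 1 else grad mu u x powr q)"

definition nontrivial_pos_solution ::
  "('v \<Rightarrow> 'v \<Rightarrow> real) \<Rightarrow> real \<Rightarrow> real \<Rightarrow> real \<Rightarrow> ('v \<Rightarrow> real) \<Rightarrow> bool" where
  "nontrivial_pos_solution mu m p q u \<longleftrightarrow>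
     (\<forall>x. u x > 0) \<and> (\<exists>x y. u x \<noteq> u y) \<and>
     (\<forall>x. (q < 0 \<longrightarrow> grad mu u x \<noteq> 0) \<and>
          mlap mu m u x + u x powr p * gradpow mu q u x \<le> 0)"

end

theory Submission
  imports Defs
begin

lemma powr_mvt:
  fixes a b e :: real
  assumes "0 < a" "a < b"
  shows "\<exists>z. a < z \<and> z < b \<and> b powr e - a powr e = (b - a) * (e * z powr (e - 1))"
proof -
  have "\<forall>x. a \<le> x \<and> x \<le> b \<longrightarrow> ((\<lambda>x. x powr e) has_real_derivative e * x powr (e - 1)) (at x)"
    using assms by (auto intro!: derivative_eq_intros)
  hence "\<forall>x. a \<le> x \<and> x \<le> b \<longrightarrow> isCont (\<lambda>x. x powr e) x"
    using DERIV_isCont by blast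
  then obtain z where "a < z" "z < b" "b powr e - a powr e = (b - a) * (e * z powr (e - 1))"
    using MVT2[of a b "\<lambda>x. x powr e" "\<lambda>x. e * x powr (e - 1)"] assms
    \<open>\<forall>x. a \<le> x \<and> x \<le> b \<longrightarrow> ((\<lambda>x. x powr e) has_real_derivative e * x powr (e - 1)) (at x)\<close>
    by blast
  thus ?thesis by blast
qed

lemma neg_powr_diff:
  fixes a b t :: real
  assumes "0 < a" "0 < b" "0 < t"
  shows "(b - a) * (b powr (-t) - a powr (-t)) \<le> - t * (b - a)\<^sup>2 * (max a b) powr (-t - 1)"
proof -
  have key: "(y - x) * (y powr (-t) - x powr (-t)) \<le> - t * (y - x)\<^sup>2 * y powr (-t - 1)"
    if xy: "0 < x" "x < y" for x y :: real
  proof -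
    obtain z where z: "x < z" "z < y" "y powr (-t) - x powr (-t) = (y - x) * (-t * z powr (-t - 1))"
      using powr_mvt[OF xy, of "-t"] by (auto simp: algebra_simps)
    have "y powr (-t - 1) \<le> z powr (-t - 1)"
      using z xy assms by (intro powr_mono2') auto
    hence "(y - x) * (y - x) * (t * y powr (-t - 1)) \<le> (y - x) * (y - x) * (t * z powr (-t - 1))"
      using xy assms by (intro mult_left_mono) auto
    moreover have "(y - x) * (y powr (-t) - x powr (-t)) = - ((y - x) * (y - x) * (t * z powr (-t - 1)))"
      unfolding z(3) by (simp add: algebra_simps)
    ultimately show ?thesis by (simp add: power2_eq_square algebra_simps)
  qed
  show ?thesis
  proof (cases a b rule: linorder_cases)
    case less thus ?thesis using key[of a b] assms by (simp add: max_def)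
  next
    case equal thus ?thesis by simp
  next
    case greater
    have "(a - b) * (a powr (-t) - b powr (-t)) \<le> - t * (a - b)\<^sup>2 * a powr (-t - 1)"
      using key[of b a] assms greater by simp
    moreover have "(b - a) * (b powr (-t) - a powr (-t)) = (a - b) * (a powr (-t) - b powr (-t))"
      by (simp add: algebra_simps)
    moreover have "(b - a)\<^sup>2 = (a - b)\<^sup>2" by (simp add: power2_commute)
    ultimately show ?thesis using greater by (simp add: max_def)
  qed
qed

lemma powr_diff_le_s:
  fixes a b s :: real
  assumes "0 \<le> b" "b < a" "1 \<le> s"
  shows "a powr s - b powr s \<le> s * a powr (s - 1) * (a - b)"
proof (cases "b = 0")
  case True
  have "a powr s = a powr (s - 1) * a" using assms by (simp add: powr_diff)
  moreover have "a powr (s - 1) * a \<le> s * a powr (s - 1) * a"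
    using assms by (intro mult_right_mono) (auto intro!: mult_right_mono[of 1 s, simplified])
  ultimately show ?thesis using True assms by simp
next
  case False
  hence "0 < b" using assms by simp
  obtain z where z: "b < z" "z < a" "a powr s - b powr s = (a - b) * (s * z powr (s - 1))"
    using powr_mvt[OF \<open>0 < b\<close> \<open>b < a\<close>, of s] by blast
  have "z powr (s - 1) \<le> a powr (s - 1)"
    using z assms \<open>0 < b\<close> by (intro powr_mono2) auto
  hence "(a - b) * (s * z powr (s - 1)) \<le> (a - b) * (s * a powr (s - 1))"
    using assms by (intro mult_left_mono) auto
  thus ?thesis using z by (simp add: algebra_simps)
qed

lemma powr_neg_diff_le:
  fixes j l :: real
  assumes "0 < j" "0 < l"
  shows "j powr (-l) - (j + 1) powr (-l) \<le> l * j powr (-l - 1)"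
proof -
  obtain z where z: "j < z" "z < j + 1" "(j+1) powr (-l) - j powr (-l) = (j + 1 - j) * (-l * z powr (-l - 1))"
    using powr_mvt[of j "j+1" "-l"] assms by auto
  have "z powr (-l - 1) \<le> j powr (-l - 1)"
    using z assms by (intro powr_mono2') auto
  hence "l * z powr (-l - 1) \<le> l * j powr (-l - 1)" using assms by simp
  moreover have "j powr (-l) = (j+1) powr (-l) + l * z powr (-l-1)" using z(3) by (simp add: algebra_simps)
  ultimately show ?thesis by linarith
qed

lemma amgm3:
  fixes a b c x y z :: real
  assumes "0 < x" "0 < y" "0 < z" "x + y + z = 1" "0 \<le> a" "0 \<le> b" "0 \<le> c"
  shows "a powr x * b powr y * c powr z \<le> x * a + y * b + z * c"
proof (cases "a = 0 \<or> b = 0 \<or> c = 0")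
  case True
  thus ?thesis using assms by auto
next
  case False
  hence pos: "0 < a" "0 < b" "0 < c" using assms by auto
  define w where "w = y + z"
  have w: "0 < w" using assms by (simp add: w_def)
  have "b powr y * c powr z = (b powr (y / w) * c powr (z / w)) powr w"
    using w pos by (simp add: powr_mult powr_powr)
  hence e: "a powr x * b powr y * c powr z = a powr x * (b powr (y / w) * c powr (z / w)) powr w"
    by simp
  have "a powr x * (b powr (y / w) * c powr (z / w)) powr w \<le> x * a + w * (b powr (y / w) * c powr (z / w))"
    using Youngs_inequality_0[of x w a "b powr (y / w) * c powr (z / w)"] assms w pos
    by (simp add: w_def)
  also have "b powr (y / w) * c powr (z / w) \<le> (y / w) * b + (z / w) * c"
    using Youngs_inequality_0[of "y/w" "z/w" b c] assms w pos
    by (simp add: w_def add_divide_distrib[symmetric])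
  hence "w * (b powr (y / w) * c powr (z / w)) \<le> w * ((y / w) * b + (z / w) * c)"
    using w by simp
  hence "x * a + w * (b powr (y / w) * c powr (z / w)) \<le> x * a + y * b + z * c"
    using w by (simp add: algebra_simps)
  finally show ?thesis using e by linarith
qed

lemma holder3:
  fixes w a b c :: "'i \<Rightarrow> real" and x y z :: real
  assumes "finite I" "\<And>i. i \<in> I \<Longrightarrow> 0 \<le> w i" "\<And>i. i \<in> I \<Longrightarrow> 0 \<le> a i"
    "\<And>i. i \<in> I \<Longrightarrow> 0 \<le> b i" "\<And>i. i \<in> I \<Longrightarrow> 0 \<le> c i"
    "0 < x" "0 < y" "0 < z" "x + y + z = 1"
  shows "(\<Sum>i\<in>I. w i * (a i powr x * b i powr y * c i powr z))
     \<le> (\<Sum>i\<in>I. w i * a i) powr x * (\<Sum>i\<in>I. w i * b i) powr y * (\<Sum>i\<in>I. w i * c i) powr z"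
proof -
  define SA where "SA = (\<Sum>i\<in>I. w i * a i)"
  define SB where "SB = (\<Sum>i\<in>I. w i * b i)"
  define SC where "SC = (\<Sum>i\<in>I. w i * c i)"
  have nn: "0 \<le> SA" "0 \<le> SB" "0 \<le> SC" unfolding SA_def SB_def SC_def
    using assms by (auto intro!: sum_nonneg)
  show ?thesis
  proof (cases "SA = 0 \<or> SB = 0 \<or> SC = 0")
    case True
    have "\<forall>i\<in>I. w i * (a i powr x * b i powr y * c i powr z) = 0"
    proof
      fix i assume i: "i \<in> I"
      show "w i * (a i powr x * b i powr y * c i powr z) = 0"
      proof (cases "w i = 0")
        case False
        hence wp: "0 < w i" using assms i by (simp add: order_less_le)
        from True show ?thesis
        proof (elim disjE)
          assume "SA = 0"
          hence "w i * a i = 0" using sum_nonneg_eq_0_iff[of I "\<lambda>i. w i * a i"] assms i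
            unfolding SA_def by auto
          thus ?thesis using wp by simp
        next
          assume "SB = 0"
          hence "w i * b i = 0" using sum_nonneg_eq_0_iff[of I "\<lambda>i. w i * b i"] assms i
            unfolding SB_def by auto
          thus ?thesis using wp by simp
        next
          assume "SC = 0"
          hence "w i * c i = 0" using sum_nonneg_eq_0_iff[of I "\<lambda>i. w i * c i"] assms i
            unfolding SC_def by auto
          thus ?thesis using wp by simp
        qed
      qed simp
    qed
    hence "(\<Sum>i\<in>I. w i * (a i powr x * b i powr y * c i powr z)) = 0"
      by (intro sum.neutral) blast
    thus ?thesis by (simp add: SA_def[symmetric] SB_def[symmetric] SC_def[symmetric])
  next
    case False
    hence pos: "0 < SA" "0 < SB" "0 < SC" using nn by auto
    define N where "N = SA powr x * SB powr y * SC powr z"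
    have Np: "0 < N" using pos by (simp add: N_def)
    have "(\<Sum>i\<in>I. w i * (a i powr x * b i powr y * c i powr z)) / N
        = (\<Sum>i\<in>I. w i * ((a i / SA) powr x * (b i / SB) powr y * (c i / SC) powr z))"
      unfolding sum_divide_distrib
      by (intro sum.cong refl) (use assms pos in \<open>simp add: N_def powr_divide\<close>)
    also have "\<dots> \<le> (\<Sum>i\<in>I. w i * (x * (a i / SA) + y * (b i / SB) + z * (c i / SC)))"
      using assms pos by (intro sum_mono mult_left_mono amgm3) auto
    also have "\<dots> = (x / SA) * (\<Sum>i\<in>I. w i * a i) + (y / SB) * (\<Sum>i\<in>I. w i * b i) + (z / SC) * (\<Sum>i\<in>I. w i * c i)"
      by (simp add: sum.distrib sum_distrib_left algebra_simps)
    also have "\<dots> = x * (SA / SA) + y * (SB / SB) + z * (SC / SC)"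
      by (simp add: SA_def[symmetric] SB_def[symmetric] SC_def[symmetric])
    also have "\<dots> = 1" using pos assms by simp
    finally have "(\<Sum>i\<in>I. w i * (a i powr x * b i powr y * c i powr z)) \<le> N"
      using Np by (simp add: divide_le_eq)
    thus ?thesis by (simp add: N_def SA_def SB_def SC_def)
  qed
qed


locale wgraph =
  fixes mu :: "'v \<Rightarrow> 'v \<Rightarrow> real" and x0 :: 'v
  assumes wg: "weighted_graph mu"
begin

definition r :: "'v \<Rightarrow> nat" where "r x = gdist mu x0 x"
definition B :: "nat \<Rightarrow> 'v set" where "B n = gball mu x0 n"

lemma mu_sym: "mu x y = mu y x" using wg by (simp add: weighted_graph_def)
lemma mu_nn: "0 \<le> mu x y" using wg by (simp add: weighted_graph_def)
lemma mu_refl: "mu x x = 0" using wg by (simp add: weighted_graph_def)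
lemma nbrs_fin: "finite (nbrs mu x)" using wg by (simp add: weighted_graph_def)
lemma conn: "(x, y) \<in> (edge_rel mu)\<^sup>*" using wg by (simp add: weighted_graph_def)
lemma inf_V: "infinite (UNIV :: 'v set)" using wg by (simp add: weighted_graph_def)

lemma adj_iff: "adj mu x y \<longleftrightarrow> mu x y \<noteq> 0"
  using mu_nn[of x y] by (auto simp: adj_def)
lemma adj_sym: "adj mu x y \<longleftrightarrow> adj mu y x" by (simp add: adj_def mu_sym)
lemma nbrs_iff: "y \<in> nbrs mu x \<longleftrightarrow> adj mu x y" by (simp add: nbrs_def)
lemma edge_iff: "(x, y) \<in> edge_rel mu \<longleftrightarrow> adj mu x y" by (simp add: edge_rel_def)

lemma exists_nbr: "\<exists>y. adj mu x y"
proof -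
  have "UNIV - {x} \<noteq> {}" using inf_V by (metis finite.simps finite_Diff2 Diff_empty infinite_imp_nonempty)
  then obtain y where "y \<noteq> x" by blast
  have "(x, y) \<in> (edge_rel mu)\<^sup>*" by (rule conn)
  then show ?thesis using \<open>y \<noteq> x\<close>
    by (cases rule: converse_rtranclE) (auto simp: edge_iff)
qed

lemma mv_pos: "0 < vmeasure mu x"
proof -
  obtain y where "adj mu x y" using exists_nbr by blast
  thus ?thesis unfolding vmeasure_def
    using nbrs_fin[of x] by (intro sum_pos2[of _ y]) (auto simp: nbrs_iff adj_def mu_nn)
qed

lemma r_path: "(x0, x) \<in> edge_rel mu ^^ r x"
proof -
  obtain n where "(x0, x) \<in> edge_rel mu ^^ n" using conn[of x0 x] rtrancl_power by blast
  thus ?thesis unfolding r_def gdist_def by (rule LeastI)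
qed

lemma r_le: "(x0, x) \<in> edge_rel mu ^^ n \<Longrightarrow> r x \<le> n"
  unfolding r_def gdist_def by (rule Least_le)

lemma r_x0: "r x0 = 0"
  using r_le[of x0 0] by simp

lemma r_adj: "adj mu x y \<Longrightarrow> r y \<le> Suc (r x)"
  using r_path[of x] by (intro r_le) (auto simp: edge_iff)

lemma r_adj2: "adj mu x y \<Longrightarrow> r x \<le> Suc (r y)"
  using r_adj adj_sym by blast

lemma r_zero: "r x = 0 \<Longrightarrow> x = x0"
  using r_path[of x] by simp

lemma B_mem: "x \<in> B n \<longleftrightarrow> r x \<le> n" by (simp add: B_def gball_def r_def)

lemma B_Suc_sub: "B (Suc n) \<subseteq> B n \<union> (\<Union>x\<in>B n. nbrs mu x)"
proof
  fix y assume "y \<in> B (Suc n)"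
  hence y: "r y \<le> Suc n" by (simp add: B_mem)
  show "y \<in> B n \<union> (\<Union>x\<in>B n. nbrs mu x)"
  proof (cases "r y \<le> n")
    case True thus ?thesis by (simp add: B_mem)
  next
    case False
    hence "r y = Suc n" using y by simp
    hence "(x0, y) \<in> edge_rel mu ^^ Suc n" using r_path[of y] by simp
    then obtain z where z: "(x0, z) \<in> edge_rel mu ^^ n" "(z, y) \<in> edge_rel mu"
      by (rule relpow_Suc_E)
    have "z \<in> B n" using r_le[OF z(1)] by (simp add: B_mem)
    moreover have "y \<in> nbrs mu z" using z(2) by (simp add: edge_iff nbrs_iff)
    ultimately show ?thesis by blast
  qed
qed

lemma B_fin: "finite (B n)"
proof (induction n)
  case 0
  have "B 0 \<subseteq> {x0}" using r_zero by (auto simp: B_mem)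
  thus ?case using finite_subset by blast
next
  case (Suc n)
  thus ?case using B_Suc_sub[of n] nbrs_fin by (meson finite_UN_I finite_Un finite_subset)
qed

lemma B_mono: "n \<le> k \<Longrightarrow> B n \<subseteq> B k" by (auto simp: B_mem)

lemma nbrs_sub_B: "r x \<le> n \<Longrightarrow> nbrs mu x \<subseteq> B (Suc n)"
  using r_adj by (fastforce simp: B_mem nbrs_iff)

lemma mv_sum: "finite F \<Longrightarrow> nbrs mu x \<subseteq> F \<Longrightarrow> vmeasure mu x = (\<Sum>y\<in>F. mu x y)"
  unfolding vmeasure_def
  by (rule sum.mono_neutral_left) (auto simp: nbrs_iff adj_iff)

lemma sum_nbrs_F: "finite F \<Longrightarrow> nbrs mu x \<subseteq> F \<Longrightarrow> (\<Sum>y\<in>nbrs mu x. mu x y * G y) = (\<Sum>y\<in>F. mu x y * G y)"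
  by (rule sum.mono_neutral_left) (auto simp: nbrs_iff adj_iff)

lemma sum_F_le_mv: "finite F \<Longrightarrow> (\<Sum>y\<in>F. mu x y) \<le> vmeasure mu x"
proof -
  assume F: "finite F"
  have "(\<Sum>y\<in>F. mu x y) = (\<Sum>y\<in>F \<inter> nbrs mu x. mu x y)"
    using F by (intro sum.mono_neutral_right) (auto simp: nbrs_iff adj_iff)
  also have "\<dots> \<le> (\<Sum>y\<in>nbrs mu x. mu x y)"
    using nbrs_fin by (intro sum_mono2) (auto simp: mu_nn)
  finally show ?thesis by (simp add: vmeasure_def)
qed

end


locale sol = wgraph mu x0 for mu :: "'v \<Rightarrow> 'v \<Rightarrow> real" and x0 :: 'v +
  fixes m p q p0 :: real and u :: "'v \<Rightarrow> real"
  assumes m1: "m > 1" and p_nn: "p \<ge> 0" and q_lo: "m - 1 - p < q" and q_hi: "q < m"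
    and p0: "p0 > 1" and p0_ineq: "\<And>x y. adj mu x y \<Longrightarrow> mu x y / vmeasure mu x \<ge> 1 / p0"
    and sol: "nontrivial_pos_solution mu m p q u"
begin

definition h :: "'v \<Rightarrow> 'v \<Rightarrow> real" where
  "h x y = \<bar>u y - u x\<bar> powr (m - 2) * (u y - u x)"
definition g :: "'v \<Rightarrow> real" where "g x = grad mu u x"
definition f :: "'v \<Rightarrow> real" where "f x = u x powr p * gradpow mu q u x"
definition K :: real where "K = 1 + p0 powr (1 / (m - 1))"

lemma u_pos: "0 < u x" using sol by (simp add: nontrivial_pos_solution_def)
lemma u_nonconst: "\<exists>x y. u x \<noteq> u y" using sol by (simp add: nontrivial_pos_solution_def)
lemma g_ne0: "q < 0 \<Longrightarrow> g x \<noteq> 0" using sol by (simp add: nontrivial_pos_solution_def g_def)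
lemma ineq: "mlap mu m u x + f x \<le> 0" using sol by (simp add: nontrivial_pos_solution_def f_def)

lemma gp_nn: "0 \<le> gradpow mu q u x" by (simp add: gradpow_def)
lemma f_nn: "0 \<le> f x" using u_pos gp_nn by (simp add: f_def)

lemma K_ge1: "1 \<le> K" by (simp add: K_def)
lemma K_pos: "0 < K" using K_ge1 by simp

lemma h_anti: "h y x = - h x y"
  by (simp add: h_def abs_minus_commute algebra_simps)

lemma mv_mlap: "vmeasure mu x * mlap mu m u x = (\<Sum>y\<in>nbrs mu x. mu x y * h x y)"
  using mv_pos[of x] by (simp add: mlap_def h_def sum_distrib_left mult.assoc)

lemma mu_ge: "adj mu x y \<Longrightarrow> vmeasure mu x / p0 \<le> mu x y"
  using p0_ineq[of x y] mv_pos[of x] p0 by (simp add: field_simps)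

lemma h_pos_case: "u x \<le> u y \<Longrightarrow> h x y = (u y - u x) powr (m - 1)"
proof -
  assume a: "u x \<le> u y"
  show ?thesis
  proof (cases "u x = u y")
    case True thus ?thesis using m1 by (simp add: h_def)
  next
    case False
    hence pos: "0 < u y - u x" using a by simp
    have "(u y - u x) powr (m - 2) * (u y - u x) = (u y - u x) powr (m - 2) * (u y - u x) powr 1"
      using pos by simp
    also have "\<dots> = (u y - u x) powr (m - 1)" using pos powr_add[of "u y - u x" "m - 2" 1] by simp
    finally show ?thesis using pos by (simp add: h_def)
  qed
qed

lemma h_lower: "- (u x powr (m - 1)) \<le> h x y"
proof (cases "u x \<le> u y")
  case True thus ?thesis using h_pos_case[OF True] by simp (smt (verit) powr_ge_zero)
next
  case False
  hence d: "0 < u x - u y" by simp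
  have "h x y = - ((u x - u y) powr (m - 1))"
    using h_pos_case[of y x] False h_anti[of x y] by simp
  moreover have "(u x - u y) powr (m - 1) \<le> u x powr (m - 1)"
    using d u_pos[of y] m1 by (intro powr_mono2) auto
  ultimately show ?thesis by simp
qed

lemma harnack: assumes "adj mu x y" shows "u y \<le> K * u x"
proof (cases "u y \<le> u x")
  case True
  have "1 * u x \<le> K * u x" using K_ge1 u_pos[of x] by (intro mult_right_mono) auto
  thus ?thesis using True by simp
next
  case False
  define d where "d = u y - u x"
  have d: "0 < d" using False by (simp add: d_def)
  have hxy: "h x y = d powr (m - 1)" using h_pos_case[of x y] False by (simp add: d_def)
  have S: "(\<Sum>z\<in>nbrs mu x. mu x z * h x z) \<le> 0"
  proof -
    have "vmeasure mu x * mlap mu m u x \<le> 0"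
      using ineq[of x] f_nn[of x] mv_pos[of x] by (simp add: mult_nonneg_nonpos)
    thus ?thesis using mv_mlap by simp
  qed
  have "mu x y * (h x y + u x powr (m - 1)) \<le> (\<Sum>z\<in>nbrs mu x. mu x z * (h x z + u x powr (m - 1)))"
  proof -
    have hl: "0 \<le> h x z + u x powr (m - 1)" for z using h_lower[of x z] by linarith
    show ?thesis using assms nbrs_fin[of x] hl mu_nn
      by (intro member_le_sum mult_nonneg_nonneg) (auto simp: nbrs_iff)
  qed
  also have "\<dots> = (\<Sum>z\<in>nbrs mu x. mu x z * h x z) + vmeasure mu x * u x powr (m - 1)"
    by (simp add: vmeasure_def algebra_simps sum.distrib sum_distrib_right)
  also have "\<dots> \<le> vmeasure mu x * u x powr (m - 1)" using S by simp
  finally have "mu x y * d powr (m - 1) \<le> vmeasure mu x * u x powr (m - 1)"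
    using hxy mu_nn[of x y] by (smt (verit) mult_left_mono powr_ge_zero)
  moreover have "vmeasure mu x / p0 * d powr (m - 1) \<le> mu x y * d powr (m - 1)"
    using mu_ge[OF assms] by (intro mult_right_mono) auto
  ultimately have "vmeasure mu x / p0 * d powr (m - 1) \<le> vmeasure mu x * u x powr (m - 1)" by simp
  hence "d powr (m - 1) \<le> p0 * u x powr (m - 1)"
    using mv_pos[of x] p0 by (simp add: field_simps)
  hence "(d powr (m - 1)) powr (1 / (m - 1)) \<le> (p0 * u x powr (m - 1)) powr (1 / (m - 1))"
    using m1 by (intro powr_mono2) auto
  hence "d \<le> p0 powr (1 / (m - 1)) * u x"
    using m1 d u_pos[of x] p0 by (simp add: powr_powr powr_mult)
  thus ?thesis by (simp add: K_def d_def algebra_simps)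
qed

lemma harnack_min: "adj mu x y \<Longrightarrow> u x / K \<le> u y"
  using harnack[of y x] adj_sym K_pos by (simp add: field_simps)

lemma g_sum_nn: "0 \<le> (\<Sum>y\<in>nbrs mu x. mu x y / (2 * vmeasure mu x) * (u y - u x)\<^sup>2)"
    by (intro sum_nonneg mult_nonneg_nonneg divide_nonneg_pos) (auto simp: mu_nn mv_pos)

lemma g_sq: "(g x)\<^sup>2 = (\<Sum>y\<in>nbrs mu x. mu x y / (2 * vmeasure mu x) * (u y - u x)\<^sup>2)"
  using g_sum_nn[of x] by (simp only: g_def grad_def real_sqrt_pow2)

lemma g_nn: "0 \<le> g x" using g_sum_nn[of x] unfolding g_def grad_def by (rule real_sqrt_ge_zero)

lemma du_le_g: assumes "adj mu x y" shows "\<bar>u y - u x\<bar> \<le> sqrt (2 * p0) * g x"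
proof -
  have "mu x y / (2 * vmeasure mu x) * (u y - u x)\<^sup>2 \<le> (g x)\<^sup>2"
    unfolding g_sq using assms nbrs_fin[of x] mv_pos[of x] mu_nn
    by (intro member_le_sum) (auto simp: nbrs_iff)
  moreover have "(u y - u x)\<^sup>2 / (2 * p0) \<le> mu x y / (2 * vmeasure mu x) * (u y - u x)\<^sup>2"
  proof -
    have "1 / p0 \<le> mu x y / vmeasure mu x" using p0_ineq[OF assms] .
    hence "(u y - u x)\<^sup>2 * (1 / p0) \<le> (u y - u x)\<^sup>2 * (mu x y / vmeasure mu x)"
      by (intro mult_left_mono) auto
    hence A: "(u y - u x)\<^sup>2 * (1 / p0) / 2 \<le> (u y - u x)\<^sup>2 * (mu x y / vmeasure mu x) / 2"
      by (rule divide_right_mono) simp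
    have "(u y - u x)\<^sup>2 / (2 * p0) = ((u y - u x)\<^sup>2 * (1 / p0)) / 2" by simp
    also have "\<dots> \<le> (u y - u x)\<^sup>2 * (mu x y / vmeasure mu x) / 2" by (rule A)
    also have "\<dots> = mu x y / (2 * vmeasure mu x) * (u y - u x)\<^sup>2"
      using mv_pos[of x] by (simp add: field_simps)
    finally show ?thesis .
  qed
  ultimately have "(u y - u x)\<^sup>2 / (2 * p0) \<le> (g x)\<^sup>2" by linarith
  hence "(u y - u x)\<^sup>2 \<le> 2 * p0 * (g x)\<^sup>2" using p0 by (simp add: pos_divide_le_eq mult.commute)
  hence "sqrt ((u y - u x)\<^sup>2) \<le> sqrt (2 * p0 * (g x)\<^sup>2)" by (rule real_sqrt_le_mono)
  thus ?thesis using g_nn[of x] p0 by (simp add: real_sqrt_mult)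
qed

lemma g_le_max: "\<exists>y. adj mu x y \<and> g x \<le> \<bar>u y - u x\<bar>"
proof -
  define M where "M = Max ((\<lambda>y. \<bar>u y - u x\<bar>) ` nbrs mu x)"
  have ne: "nbrs mu x \<noteq> {}" using exists_nbr[of x] by (auto simp: nbrs_iff)
  have "M \<in> (\<lambda>y. \<bar>u y - u x\<bar>) ` nbrs mu x"
    using Max_in[of "(\<lambda>y. \<bar>u y - u x\<bar>) ` nbrs mu x"] nbrs_fin[of x] ne unfolding M_def by auto
  then obtain y where y: "y \<in> nbrs mu x" "M = \<bar>u y - u x\<bar>" by blast
  have le: "\<bar>u z - u x\<bar> \<le> M" if "z \<in> nbrs mu x" for z
    unfolding M_def using that nbrs_fin[of x] by (intro Max_ge) auto
  have "(g x)\<^sup>2 \<le> (\<Sum>z\<in>nbrs mu x. mu x z / (2 * vmeasure mu x) * M\<^sup>2)"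
    unfolding g_sq using mv_pos[of x] mu_nn
  proof (intro sum_mono mult_left_mono)
    fix z assume z: "z \<in> nbrs mu x"
    show "(u z - u x)\<^sup>2 \<le> M\<^sup>2" using le[OF z] power_mono[of "\<bar>u z - u x\<bar>" M 2] by simp
    show "0 \<le> mu x z / (2 * vmeasure mu x)" using mv_pos[of x] mu_nn[of x z] by simp
  qed
  also have "\<dots> = M\<^sup>2 / 2"
    using mv_pos[of x] by (simp add: sum_distrib_right[symmetric] sum_divide_distrib[symmetric] vmeasure_def[symmetric])
  also have "\<dots> \<le> M\<^sup>2" by simp
  finally have "g x \<le> M" using y g_nn[of x] by (smt (verit) abs_ge_zero power2_le_imp_le)
  thus ?thesis using y by (auto simp: nbrs_iff)
qed

lemma g_pow_le: "vmeasure mu x * g x powr m \<le> p0 * (\<Sum>y\<in>nbrs mu x. mu x y * \<bar>u y - u x\<bar> powr m)"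
proof -
  obtain y where y: "adj mu x y" "g x \<le> \<bar>u y - u x\<bar>" using g_le_max by blast
  have "g x powr m \<le> \<bar>u y - u x\<bar> powr m" using y g_nn[of x] m1 by (intro powr_mono2) auto
  hence "vmeasure mu x * g x powr m \<le> vmeasure mu x * \<bar>u y - u x\<bar> powr m"
    using mv_pos[of x] by simp
  also have "\<dots> \<le> p0 * mu x y * \<bar>u y - u x\<bar> powr m"
    using mu_ge[OF y(1)] p0 by (intro mult_right_mono) (auto simp: field_simps)
  also have "\<dots> \<le> p0 * (\<Sum>y\<in>nbrs mu x. mu x y * \<bar>u y - u x\<bar> powr m)"
    using y nbrs_fin[of x] p0 mu_nn
    by (subst mult.assoc, intro mult_left_mono member_le_sum) (auto simp: nbrs_iff)
  finally show ?thesis .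
qed

lemma gp_eq: "0 < g x \<Longrightarrow> gradpow mu q u x = g x powr q"
  by (simp add: gradpow_def g_def)

lemma u_const_adj: "(\<And>x y. adj mu x y \<Longrightarrow> u y = u x) \<Longrightarrow> u y = u x"
proof -
  assume a: "\<And>x y. adj mu x y \<Longrightarrow> u y = u x"
  have "(x, y) \<in> (edge_rel mu)\<^sup>*" by (rule conn)
  thus ?thesis by (induction rule: rtrancl_induct) (auto simp: edge_iff dest: a)
qed

lemma f_not_zero: "\<exists>x. f x \<noteq> 0"
proof (rule ccontr)
  assume "\<not> (\<exists>x. f x \<noteq> 0)"
  hence f0: "f x = 0" for x by simp
  have gp0: "gradpow mu q u x = 0" for x using f0[of x] u_pos[of x] by (simp add: f_def)
  have "q \<noteq> 0" using gp0[of x0] by (auto simp: gradpow_def split: if_splits)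
  have g0: "g x = 0" for x using gp0[of x] \<open>q \<noteq> 0\<close> by (simp add: gradpow_def g_def)
  show False
  proof (cases "q < 0")
    case True thus False using g_ne0 g0 by blast
  next
    case False
    have "u y = u x" if "adj mu x y" for x y using du_le_g[OF that] g0[of x] by simp
    hence "u y = u x" for x y using u_const_adj by blast
    thus False using u_nonconst by metis
  qed
qed

end


lemma term_bound:
  fixes a b P Q t m :: real
  assumes "0 < a" "0 < b" "0 \<le> P" "0 \<le> Q" "0 < t" "1 < m"
  shows "\<bar>b - a\<bar> powr (m - 2) * (b - a) * (b powr (-t) * Q - a powr (-t) * P)
    \<le> - t * (\<bar>b - a\<bar> powr m * (max a b) powr (-t - 1) * max P Q)
       + \<bar>b - a\<bar> powr (m - 1) * (min a b) powr (-t) * \<bar>Q - P\<bar>"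
proof (cases "a = b")
  case True thus ?thesis using assms by simp
next
  case False
  define d where "d = \<bar>b - a\<bar>"
  have d: "0 < d" using False by (simp add: d_def)
  define H where "H = d powr (m - 2)"
  have H: "0 \<le> H" by (simp add: H_def)
  have Hd: "H * d = d powr (m - 1)"
    using d powr_add[of d "m - 2" 1] by (simp add: H_def)
  have Hd2: "H * (b - a)\<^sup>2 = d powr m"
  proof -
    have "(b - a)\<^sup>2 = d powr 2" using d by (simp add: d_def powr_numeral)
    thus ?thesis using d powr_add[of d "m - 2" 2] by (simp add: H_def)
  qed
  define mx where "mx = (max a b) powr (-t - 1)"
  have mx: "0 \<le> mx" by (simp add: mx_def)
  have E: "(b - a) * (b powr (-t) - a powr (-t)) \<le> - t * (b - a)\<^sup>2 * mx"
    using neg_powr_diff[of a b t] assms by (simp add: mx_def)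
  have bad: "b - a \<le> d" by (simp add: d_def)
  have amin: "a powr (-t) \<le> (min a b) powr (-t)" using assms by (intro powr_mono2') auto
  have bmin: "b powr (-t) \<le> (min a b) powr (-t)" using assms by (intro powr_mono2') auto
  show ?thesis
  proof (cases "P \<le> Q")
    case True
    have eq: "H * (b - a) * (b powr (-t) * Q - a powr (-t) * P)
        = H * Q * ((b - a) * (b powr (-t) - a powr (-t))) + H * (b - a) * a powr (-t) * (Q - P)"
      by (simp add: algebra_simps)
    have 1: "H * Q * ((b - a) * (b powr (-t) - a powr (-t))) \<le> H * Q * (- t * (b - a)\<^sup>2 * mx)"
      using E H assms by (intro mult_left_mono) auto
    have e1b: "H * Q * (- t * (b - a)\<^sup>2 * mx) = - t * (d powr m * mx * Q)"
      using Hd2 by (simp add: algebra_simps)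
    have 2: "H * (b - a) * a powr (-t) * (Q - P) \<le> H * d * a powr (-t) * (Q - P)"
      using bad H True by (intro mult_right_mono mult_left_mono) auto
    have 3: "H * d * a powr (-t) * (Q - P) \<le> H * d * (min a b) powr (-t) * (Q - P)"
      using amin H d True by (intro mult_right_mono mult_left_mono) auto
    have mQ: "max P Q = Q" and aQ: "\<bar>Q - P\<bar> = Q - P" using True by auto
    have 23: "H * (b - a) * a powr (-t) * (Q - P) \<le> d powr (m - 1) * (min a b) powr (-t) * \<bar>Q - P\<bar>"
    proof -
      have "H * (b - a) * a powr (-t) * (Q - P) \<le> H * d * (min a b) powr (-t) * (Q - P)"
        using 2 3 by linarith
      also have "\<dots> = d powr (m - 1) * (min a b) powr (-t) * \<bar>Q - P\<bar>" by (simp add: Hd[symmetric] aQ)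
      finally show ?thesis .
    qed
    have "H * (b - a) * (b powr (-t) * Q - a powr (-t) * P)
      \<le> - t * (d powr m * mx * max P Q) + d powr (m - 1) * (min a b) powr (-t) * \<bar>Q - P\<bar>"
      unfolding eq mQ using 1 e1b 23 by linarith
    thus ?thesis by (simp only: H_def d_def mx_def)
  next
    case False
    have eq: "H * (b - a) * (b powr (-t) * Q - a powr (-t) * P)
        = H * P * ((b - a) * (b powr (-t) - a powr (-t))) + H * (b - a) * b powr (-t) * (Q - P)"
      by (simp add: algebra_simps)
    have 1: "H * P * ((b - a) * (b powr (-t) - a powr (-t))) \<le> H * P * (- t * (b - a)\<^sup>2 * mx)"
      using E H assms by (intro mult_left_mono) auto
    have e1b: "H * P * (- t * (b - a)\<^sup>2 * mx) = - t * (d powr m * mx * P)"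
      using Hd2 by (simp add: algebra_simps)
    have 2: "H * (b - a) * b powr (-t) * (Q - P) \<le> H * d * b powr (-t) * (P - Q)"
    proof -
      have "(b - a) * (Q - P) = (a - b) * (P - Q)" by (simp add: algebra_simps)
      also have "\<dots> \<le> d * (P - Q)" using False by (intro mult_right_mono) (auto simp: d_def)
      finally have "(b - a) * (Q - P) \<le> d * (P - Q)" .
      hence "H * b powr (-t) * ((b - a) * (Q - P)) \<le> H * b powr (-t) * (d * (P - Q))"
        using H by (intro mult_left_mono) auto
      thus ?thesis by (simp add: algebra_simps)
    qed
    have 3: "H * d * b powr (-t) * (P - Q) \<le> H * d * (min a b) powr (-t) * (P - Q)"
      using bmin H d False by (intro mult_right_mono mult_left_mono) auto
    have mQ: "max P Q = P" and aQ: "\<bar>Q - P\<bar> = P - Q" using False by auto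
    have 23: "H * (b - a) * b powr (-t) * (Q - P) \<le> d powr (m - 1) * (min a b) powr (-t) * \<bar>Q - P\<bar>"
    proof -
      have "H * (b - a) * b powr (-t) * (Q - P) \<le> H * d * (min a b) powr (-t) * (P - Q)"
        using 2 3 by linarith
      also have "\<dots> = d powr (m - 1) * (min a b) powr (-t) * \<bar>Q - P\<bar>" by (simp add: Hd[symmetric] aQ)
      finally show ?thesis .
    qed
    have "H * (b - a) * (b powr (-t) * Q - a powr (-t) * P)
      \<le> - t * (d powr m * mx * max P Q) + d powr (m - 1) * (min a b) powr (-t) * \<bar>Q - P\<bar>"
      unfolding eq mQ using 1 e1b 23 by linarith
    thus ?thesis by (simp only: H_def d_def mx_def)
  qed
qed

context sol
begin

lemma green:
  assumes F: "finite F" and supp: "\<And>x. \<eta> x \<noteq> 0 \<Longrightarrow> x \<in> F \<and> nbrs mu x \<subseteq> F"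
  shows "(\<Sum>x\<in>F. vmeasure mu x * mlap mu m u x * \<eta> x)
      = (1/2) * (\<Sum>x\<in>F. \<Sum>y\<in>F. mu x y * h x y * (\<eta> x - \<eta> y))"
proof -
  define S where "S = (\<Sum>x\<in>F. \<Sum>y\<in>F. mu x y * h x y * \<eta> x)"
  have 1: "(\<Sum>x\<in>F. vmeasure mu x * mlap mu m u x * \<eta> x) = S"
    unfolding S_def
  proof (intro sum.cong refl)
    fix x assume "x \<in> F"
    show "vmeasure mu x * mlap mu m u x * \<eta> x = (\<Sum>y\<in>F. mu x y * h x y * \<eta> x)"
    proof (cases "\<eta> x = 0")
      case True thus ?thesis by simp
    next
      case False
      hence "nbrs mu x \<subseteq> F" using supp by blast
      hence "vmeasure mu x * mlap mu m u x = (\<Sum>y\<in>F. mu x y * h x y)"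
        using mv_mlap[of x] sum_nbrs_F[OF F, of x "h x"] by simp
      thus ?thesis by (simp add: sum_distrib_right)
    qed
  qed
  have 2: "(\<Sum>x\<in>F. \<Sum>y\<in>F. mu x y * h x y * \<eta> y) = - S"
  proof -
    have "(\<Sum>x\<in>F. \<Sum>y\<in>F. mu x y * h x y * \<eta> y) = (\<Sum>y\<in>F. \<Sum>x\<in>F. mu x y * h x y * \<eta> y)"
      by (rule sum.swap)
    also have "\<dots> = (\<Sum>y\<in>F. \<Sum>x\<in>F. - (mu y x * h y x * \<eta> y))"
    proof (intro sum.cong refl)
      fix y x show "mu x y * h x y * \<eta> y = - (mu y x * h y x * \<eta> y)"
        using h_anti[of y x] mu_sym[of x y] by simp
    qed
    also have "\<dots> = - S" by (simp add: S_def sum_negf)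
    finally show ?thesis .
  qed
  have "(\<Sum>x\<in>F. \<Sum>y\<in>F. mu x y * h x y * (\<eta> x - \<eta> y))
      = S - (\<Sum>x\<in>F. \<Sum>y\<in>F. mu x y * h x y * \<eta> y)"
    by (simp add: S_def algebra_simps sum_subtractf)
  thus ?thesis using 1 2 by simp
qed

lemma main_ineq:
  assumes F: "finite F" and Phi: "\<And>x. 0 \<le> \<Phi> x"
    and supp: "\<And>x. \<Phi> x \<noteq> 0 \<Longrightarrow> x \<in> F \<and> nbrs mu x \<subseteq> F" and t: "0 < t"
  shows "(\<Sum>x\<in>F. vmeasure mu x * f x * u x powr (-t) * \<Phi> x)
     + (t/2) * (\<Sum>x\<in>F. \<Sum>y\<in>F. mu x y * (\<bar>u y - u x\<bar> powr m * (max (u x) (u y)) powr (-t - 1) * max (\<Phi> x) (\<Phi> y)))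
   \<le> (1/2) * (\<Sum>x\<in>F. \<Sum>y\<in>F. mu x y * (\<bar>u y - u x\<bar> powr (m - 1) * (min (u x) (u y)) powr (-t) * \<bar>\<Phi> y - \<Phi> x\<bar>))"
proof -
  define \<eta> where "\<eta> x = u x powr (-t) * \<Phi> x" for x
  have supp': "\<eta> x \<noteq> 0 \<Longrightarrow> x \<in> F \<and> nbrs mu x \<subseteq> F" for x using supp by (auto simp: \<eta>_def)
  define X where "X x y = \<bar>u y - u x\<bar> powr m * (max (u x) (u y)) powr (-t - 1) * max (\<Phi> x) (\<Phi> y)" for x y
  define Y where "Y x y = \<bar>u y - u x\<bar> powr (m - 1) * (min (u x) (u y)) powr (-t) * \<bar>\<Phi> y - \<Phi> x\<bar>" for x y
  have "(\<Sum>x\<in>F. vmeasure mu x * f x * u x powr (-t) * \<Phi> x) \<le> (\<Sum>x\<in>F. - (vmeasure mu x * mlap mu m u x * \<eta> x))"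
  proof (intro sum_mono)
    fix x
    have "f x \<le> - mlap mu m u x" using ineq[of x] by simp
    moreover have "0 \<le> vmeasure mu x * (u x powr (-t) * \<Phi> x)" using mv_pos[of x] Phi[of x] by simp
    ultimately have "vmeasure mu x * (u x powr (-t) * \<Phi> x) * f x \<le> vmeasure mu x * (u x powr (-t) * \<Phi> x) * (- mlap mu m u x)"
      by (intro mult_left_mono)
    thus "vmeasure mu x * f x * u x powr (-t) * \<Phi> x \<le> - (vmeasure mu x * mlap mu m u x * \<eta> x)"
      by (simp add: \<eta>_def algebra_simps)
  qed
  also have "\<dots> = (1/2) * (\<Sum>x\<in>F. \<Sum>y\<in>F. mu x y * h x y * (\<eta> y - \<eta> x))"
  proof -
    have e: "mu x y * h x y * (\<eta> y - \<eta> x) = - (mu x y * h x y * (\<eta> x - \<eta> y))" for x y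
      by (simp add: algebra_simps)
    show ?thesis using green[OF F supp'] by (simp only: e sum_negf) simp
  qed
  also have "\<dots> \<le> (1/2) * (\<Sum>x\<in>F. \<Sum>y\<in>F. - t * (mu x y * X x y) + mu x y * Y x y)"
  proof (intro mult_left_mono sum_mono)
    fix x y
    have "h x y * (\<eta> y - \<eta> x) \<le> - t * X x y + Y x y"
      unfolding h_def \<eta>_def X_def Y_def
      using term_bound[of "u x" "u y" "\<Phi> x" "\<Phi> y" t m] u_pos Phi t m1 by simp
    hence "mu x y * (h x y * (\<eta> y - \<eta> x)) \<le> mu x y * (- t * X x y + Y x y)"
      using mu_nn[of x y] by (rule mult_left_mono)
    thus "mu x y * h x y * (\<eta> y - \<eta> x) \<le> - t * (mu x y * X x y) + mu x y * Y x y"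
      by (simp add: algebra_simps)
  qed simp
  also have "\<dots> = - (t/2) * (\<Sum>x\<in>F. \<Sum>y\<in>F. mu x y * X x y) + (1/2) * (\<Sum>x\<in>F. \<Sum>y\<in>F. mu x y * Y x y)"
  proof -
    have "(\<Sum>x\<in>F. \<Sum>y\<in>F. - t * (mu x y * X x y) + mu x y * Y x y)
        = (\<Sum>x\<in>F. (\<Sum>y\<in>F. - t * (mu x y * X x y)) + (\<Sum>y\<in>F. mu x y * Y x y))"
      by (simp only: sum.distrib)
    also have "\<dots> = (\<Sum>x\<in>F. \<Sum>y\<in>F. - t * (mu x y * X x y)) + (\<Sum>x\<in>F. \<Sum>y\<in>F. mu x y * Y x y)"
      by (simp only: sum.distrib)
    also have "(\<Sum>x\<in>F. \<Sum>y\<in>F. - t * (mu x y * X x y)) = - t * (\<Sum>x\<in>F. \<Sum>y\<in>F. mu x y * X x y)"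
      by (simp only: sum_distrib_left)
    finally show ?thesis by (simp add: algebra_simps)
  qed
  finally show ?thesis by (simp add: X_def Y_def)
qed

end


lemma absorb:
  fixes A B c C Z \<beta> :: real
  assumes "0 \<le> A" "0 \<le> B" "0 < c" "0 \<le> C" "0 \<le> Z" "0 < \<beta>" "\<beta> < 1"
    and ineq: "A + c * B \<le> C * Z * B powr \<beta>"
  shows "A \<le> (C * Z * c powr (-\<beta>)) powr (1 / (1 - \<beta>))"
proof -
  define R where "R = A + c * B"
  have R0: "0 \<le> R" using assms by (simp add: R_def)
  show ?thesis
  proof (cases "R = 0")
    case True
    hence "A = 0" using assms by (simp add: R_def) (smt (verit) mult_nonneg_nonneg)
    thus ?thesis by simp
  next
    case False
    hence Rp: "0 < R" using R0 by simp
    have "B \<le> R / c" using assms by (simp add: R_def field_simps)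
    hence "B powr \<beta> \<le> (R / c) powr \<beta>" using assms by (intro powr_mono2) auto
    also have "\<dots> = R powr \<beta> * c powr (-\<beta>)" using Rp assms by (simp add: powr_divide powr_minus field_simps)
    finally have "C * Z * B powr \<beta> \<le> C * Z * (R powr \<beta> * c powr (-\<beta>))"
      using assms by (intro mult_left_mono) auto
    hence "R \<le> (C * Z * c powr (-\<beta>)) * R powr \<beta>" using ineq by (simp add: R_def algebra_simps)
    hence "R / R powr \<beta> \<le> C * Z * c powr (-\<beta>)" using Rp by (simp add: divide_le_eq)
    moreover have "R / R powr \<beta> = R powr (1 - \<beta>)" using Rp by (simp add: powr_diff)
    ultimately have le: "R powr (1 - \<beta>) \<le> C * Z * c powr (-\<beta>)" by simp
    have "R = (R powr (1 - \<beta>)) powr (1 / (1 - \<beta>))" using Rp assms by (simp add: powr_powr)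
    also have "\<dots> \<le> (C * Z * c powr (-\<beta>)) powr (1 / (1 - \<beta>))"
      using le assms by (intro powr_mono2) auto
    finally show ?thesis using assms by (simp add: R_def) (smt (verit) mult_nonneg_nonneg)
  qed
qed

context sol
begin

lemma pw:
  fixes t s \<alpha> \<beta> \<gamma> lam d :: real
  assumes t: "0 < t" and phi: "0 < \<phi>x" "\<phi>x \<le> 1" and d: "0 < d"
    and par: "0 < \<alpha>" "0 < \<beta>" "0 < \<gamma>" "\<alpha> + \<beta> + \<gamma> = 1"
      "p * \<alpha> - t * \<alpha> - (1 + t) * \<beta> = - t" "q * \<alpha> + m * \<beta> = m - 1" "1 \<le> s * \<gamma>" "lam * \<gamma> = 1"
  shows "g x powr (m - 1) * u x powr (-t) * \<phi>x powr (s - 1) * d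
    \<le> (f x * u x powr (-t) * \<phi>x powr s) powr \<alpha> * (g x powr m * u x powr (-1 - t) * \<phi>x powr s) powr \<beta>
       * (d powr lam) powr \<gamma>"
proof (cases "g x = 0")
  case True thus ?thesis using m1 by simp
next
  case False
  hence gp: "0 < g x" using g_nn[of x] by simp
  have up: "0 < u x" by (rule u_pos)
  have fx: "f x = u x powr p * g x powr q" using gp_eq[OF gp] by (simp add: f_def)
  define Lg where "Lg = ln (g x)"
  define Lu where "Lu = ln (u x)"
  define Lp where "Lp = ln \<phi>x"
  define Ld where "Ld = ln d"
  have Lp: "Lp \<le> 0" using phi by (simp add: Lp_def)
  have lhs: "g x powr (m - 1) * u x powr (-t) * \<phi>x powr (s - 1) * d
      = exp ((m - 1) * Lg + (-t) * Lu + (s - 1) * Lp + Ld)"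
    using gp up phi d by (simp add: powr_def Lg_def Lu_def Lp_def Ld_def exp_add exp_diff exp_minus field_simps)
  have rhs: "(f x * u x powr (-t) * \<phi>x powr s) powr \<alpha> * (g x powr m * u x powr (-1 - t) * \<phi>x powr s) powr \<beta>
       * (d powr lam) powr \<gamma>
      = exp (\<alpha> * (p * Lu + q * Lg + (-t) * Lu + s * Lp) + \<beta> * (m * Lg + (-1 - t) * Lu + s * Lp) + (lam * \<gamma>) * Ld)"
    using gp up phi d unfolding fx
    by (simp add: powr_def Lg_def Lu_def Lp_def Ld_def ln_mult ln_exp mult_exp_exp algebra_simps)
  have e1: "Lg * (q * \<alpha> + m * \<beta>) = Lg * (m - 1)" using par by simp
  have e2: "Lu * (p * \<alpha> - t * \<alpha> - (1 + t) * \<beta>) = Lu * (- t)" using par by simp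
  have e3: "Lp * (s * (\<alpha> + \<beta>) - (s - 1)) \<ge> 0"
  proof -
    have h: "\<alpha> + \<beta> = 1 - \<gamma>" using par by linarith
    have "s * (\<alpha> + \<beta>) - (s - 1) = 1 - s * \<gamma>" unfolding h by (simp add: algebra_simps)
    hence "s * (\<alpha> + \<beta>) - (s - 1) \<le> 0" using par by simp
    thus ?thesis using Lp by (simp add: mult_nonpos_nonpos)
  qed
  have "(m - 1) * Lg + (-t) * Lu + (s - 1) * Lp + Ld
      \<le> \<alpha> * (p * Lu + q * Lg + (-t) * Lu + s * Lp) + \<beta> * (m * Lg + (-1 - t) * Lu + s * Lp) + (lam * \<gamma>) * Ld"
    using e1 e2 e3 par(8) by (simp add: algebra_simps)
  thus ?thesis unfolding lhs rhs by simp
qed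

end


context sol
begin

definition Asum :: "real \<Rightarrow> real \<Rightarrow> ('v \<Rightarrow> real) \<Rightarrow> 'v set \<Rightarrow> real" where
  "Asum t s \<phi> S = (\<Sum>x\<in>S. vmeasure mu x * f x * u x powr (-t) * \<phi> x powr s)"

definition Esum :: "('v \<Rightarrow> real) \<Rightarrow> real \<Rightarrow> 'v set \<Rightarrow> real" where
  "Esum \<phi> lam F = (\<Sum>x\<in>F. \<Sum>y\<in>F. if \<phi> y < \<phi> x then mu x y * (\<phi> x - \<phi> y) powr lam else 0)"

definition C1 :: "real \<Rightarrow> real" where "C1 s = sqrt (2 * p0) powr (m - 1) * K * s"
definition ct :: "real \<Rightarrow> real" where "ct t = t / (2 * K\<^sup>2 * p0)"

lemma Asum_nn: "0 \<le> Asum t s \<phi> S"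
  unfolding Asum_def using mv_pos f_nn by (intro sum_nonneg mult_nonneg_nonneg) (auto intro: less_imp_le)

lemma Esum_nn: "0 \<le> Esum \<phi> lam F"
  unfolding Esum_def using mu_nn by (intro sum_nonneg) auto

lemma step_B:
  assumes F: "finite F" and supp: "\<And>x. \<phi> x \<noteq> 0 \<Longrightarrow> x \<in> F \<and> nbrs mu x \<subseteq> F"
    and phi: "\<And>x. 0 \<le> \<phi> x" and t: "0 < t" "t \<le> 1" and s: "0 < s" and x: "x \<in> F"
  shows "vmeasure mu x * g x powr m * u x powr (-1 - t) * \<phi> x powr s
    \<le> K\<^sup>2 * p0 * (\<Sum>y\<in>F. mu x y * (\<bar>u y - u x\<bar> powr m * (max (u x) (u y)) powr (-t - 1) * max (\<phi> x powr s) (\<phi> y powr s)))"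
proof (cases "\<phi> x = 0")
  case True
  have "0 \<le> (\<Sum>y\<in>F. mu x y * (\<bar>u y - u x\<bar> powr m * (max (u x) (u y)) powr (-t - 1) * max (\<phi> x powr s) (\<phi> y powr s)))"
    using mu_nn by (intro sum_nonneg mult_nonneg_nonneg) (auto simp: le_max_iff_disj)
  thus ?thesis using True p0 by simp
next
  case False
  hence nb: "nbrs mu x \<subseteq> F" using supp by blast
  define c where "c = K powr (-2) * u x powr (-t - 1) * \<phi> x powr s"
  have e: "(-1 - t) = (-t - 1)" by simp
  have c: "0 \<le> c" by (simp add: c_def)
  have tb: "mu x y * \<bar>u y - u x\<bar> powr m * c
      \<le> mu x y * (\<bar>u y - u x\<bar> powr m * (max (u x) (u y)) powr (-t - 1) * max (\<phi> x powr s) (\<phi> y powr s))" for y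
  proof (cases "adj mu x y")
    case False thus ?thesis by (simp add: adj_iff)
  next
    case True
    have "1 * u x \<le> K * u x" using K_ge1 u_pos[of x] by (intro mult_right_mono) auto
    hence mx: "max (u x) (u y) \<le> K * u x" using harnack[OF True] by simp
    have "(K * u x) powr (-t - 1) \<le> (max (u x) (u y)) powr (-t - 1)"
      using mx u_pos[of x] t by (intro powr_mono2') auto
    moreover have "K powr (-2) \<le> K powr (-t - 1)" using K_ge1 t by (intro powr_mono) auto
    hence "K powr (-2) * u x powr (-t - 1) \<le> K powr (-t - 1) * u x powr (-t - 1)"
      by (simp add: mult_right_mono)
    moreover have "(K * u x) powr (-t - 1) = K powr (-t - 1) * u x powr (-t - 1)"
      using K_pos u_pos[of x] by (simp add: powr_mult)
    ultimately have 1: "K powr (-2) * u x powr (-t - 1) \<le> (max (u x) (u y)) powr (-t - 1)" by simp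
    have 2: "\<phi> x powr s \<le> max (\<phi> x powr s) (\<phi> y powr s)" by simp
    have "c \<le> (max (u x) (u y)) powr (-t - 1) * max (\<phi> x powr s) (\<phi> y powr s)"
      unfolding c_def using 1 2 by (intro mult_mono) auto
    hence "\<bar>u y - u x\<bar> powr m * c \<le> \<bar>u y - u x\<bar> powr m * ((max (u x) (u y)) powr (-t - 1) * max (\<phi> x powr s) (\<phi> y powr s))"
      by (intro mult_left_mono) auto
    hence "mu x y * (\<bar>u y - u x\<bar> powr m * c) \<le> mu x y * (\<bar>u y - u x\<bar> powr m * ((max (u x) (u y)) powr (-t - 1) * max (\<phi> x powr s) (\<phi> y powr s)))"
      using mu_nn[of x y] by (rule mult_left_mono)
    thus ?thesis by (simp only: mult.assoc)
  qed
  have "vmeasure mu x * g x powr m \<le> p0 * (\<Sum>y\<in>F. mu x y * \<bar>u y - u x\<bar> powr m)"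
    using g_pow_le[of x] sum_nbrs_F[OF F nb, of "\<lambda>y. \<bar>u y - u x\<bar> powr m"] by simp
  hence "vmeasure mu x * g x powr m * c \<le> p0 * (\<Sum>y\<in>F. mu x y * \<bar>u y - u x\<bar> powr m) * c"
    using c by (rule mult_right_mono)
  also have "\<dots> = p0 * (\<Sum>y\<in>F. mu x y * \<bar>u y - u x\<bar> powr m * c)" by (simp add: sum_distrib_right)
  also have "\<dots> \<le> p0 * (\<Sum>y\<in>F. mu x y * (\<bar>u y - u x\<bar> powr m * (max (u x) (u y)) powr (-t - 1) * max (\<phi> x powr s) (\<phi> y powr s)))"
    using p0 tb by (intro mult_left_mono sum_mono) auto
  finally have "vmeasure mu x * g x powr m * c \<le> p0 * (\<Sum>y\<in>F. mu x y * (\<bar>u y - u x\<bar> powr m * (max (u x) (u y)) powr (-t - 1) * max (\<phi> x powr s) (\<phi> y powr s)))" .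
  hence "K\<^sup>2 * (vmeasure mu x * g x powr m * c) \<le> K\<^sup>2 * (p0 * (\<Sum>y\<in>F. mu x y * (\<bar>u y - u x\<bar> powr m * (max (u x) (u y)) powr (-t - 1) * max (\<phi> x powr s) (\<phi> y powr s))))"
    by (intro mult_left_mono) auto
  moreover have "K\<^sup>2 * (vmeasure mu x * g x powr m * c) = vmeasure mu x * g x powr m * u x powr (-1 - t) * \<phi> x powr s"
  proof -
    have "K powr (-2) = 1 / K\<^sup>2" using K_pos by (simp add: powr_minus powr_numeral divide_inverse)
    hence "K\<^sup>2 * K powr (-2) = 1" using K_pos by simp
    thus ?thesis by (simp add: c_def e algebra_simps)
  qed
  ultimately show ?thesis by (simp only: mult.assoc)
qed

lemma sym_split:
  fixes G :: "'v \<Rightarrow> 'v \<Rightarrow> real" and \<phi> :: "'v \<Rightarrow> real"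
  assumes F: "finite F" and sym: "\<And>x y. G y x = G x y" and z: "\<And>x y. \<phi> x = \<phi> y \<Longrightarrow> G x y = 0"
  shows "(\<Sum>x\<in>F. \<Sum>y\<in>F. G x y) = 2 * (\<Sum>x\<in>F. \<Sum>y\<in>F. if \<phi> y < \<phi> x then G x y else 0)"
proof -
  have pt: "G x y = (if \<phi> y < \<phi> x then G x y else 0) + (if \<phi> x < \<phi> y then G x y else 0)" for x y
    using z[of x y] by auto
  have "(\<Sum>x\<in>F. \<Sum>y\<in>F. G x y) = (\<Sum>x\<in>F. \<Sum>y\<in>F. if \<phi> y < \<phi> x then G x y else 0)
      + (\<Sum>x\<in>F. \<Sum>y\<in>F. if \<phi> x < \<phi> y then G x y else 0)"
    by (subst pt) (simp only: sum.distrib)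
  also have "(\<Sum>x\<in>F. \<Sum>y\<in>F. if \<phi> x < \<phi> y then G x y else 0) = (\<Sum>y\<in>F. \<Sum>x\<in>F. if \<phi> x < \<phi> y then G x y else 0)"
    by (rule sum.swap)
  also have "\<dots> = (\<Sum>x\<in>F. \<Sum>y\<in>F. if \<phi> y < \<phi> x then G x y else 0)"
  proof (intro sum.cong refl)
    fix x y show "(if \<phi> y < \<phi> x then G y x else 0) = (if \<phi> y < \<phi> x then G x y else 0)"
      using sym[of x y] by simp
  qed
  finally show ?thesis by simp
qed

lemma step_S3:
  assumes phi: "\<And>x. 0 \<le> \<phi> x" "\<And>x. \<phi> x \<le> 1" and lt: "\<phi> y < \<phi> x"
    and t: "0 < t" "t \<le> 1" and s: "1 \<le> s"
  shows "mu x y * (\<bar>u y - u x\<bar> powr (m - 1) * (min (u x) (u y)) powr (-t) * \<bar>\<phi> y powr s - \<phi> x powr s\<bar>)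
    \<le> C1 s * (mu x y * (g x powr (m - 1) * u x powr (-t) * \<phi> x powr (s - 1) * (\<phi> x - \<phi> y)))"
proof (cases "adj mu x y")
  case False thus ?thesis by (simp add: adj_iff)
next
  case True
  have i: "\<bar>u y - u x\<bar> powr (m - 1) \<le> sqrt (2 * p0) powr (m - 1) * g x powr (m - 1)"
  proof -
    have "\<bar>u y - u x\<bar> powr (m - 1) \<le> (sqrt (2 * p0) * g x) powr (m - 1)"
      using du_le_g[OF True] m1 by (intro powr_mono2) auto
    thus ?thesis using g_nn[of x] p0 by (simp add: powr_mult)
  qed
  have ii: "(min (u x) (u y)) powr (-t) \<le> K * u x powr (-t)"
  proof -
    have "u x / K \<le> u x" using K_ge1 u_pos[of x] by (simp add: divide_le_eq mult_le_cancel_left1)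
    moreover have "u x / K \<le> u y" using harnack_min[OF True] .
    ultimately have mn: "u x / K \<le> min (u x) (u y)" by simp
    have "(min (u x) (u y)) powr (-t) \<le> (u x / K) powr (-t)"
      using mn u_pos[of x] K_pos t by (intro powr_mono2') auto
    also have "\<dots> = u x powr (-t) * K powr t"
      using u_pos[of x] K_pos by (simp add: powr_divide[of "u x" K] powr_minus_divide)
    also have "\<dots> \<le> u x powr (-t) * K"
    proof -
      have "K powr t \<le> K powr 1" using K_ge1 t by (intro powr_mono) auto
      thus ?thesis using K_pos by (intro mult_left_mono) auto
    qed
    finally show ?thesis by (simp add: mult.commute)
  qed
  have iii: "\<bar>\<phi> y powr s - \<phi> x powr s\<bar> \<le> s * \<phi> x powr (s - 1) * (\<phi> x - \<phi> y)"
  proof -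
    have "\<phi> y powr s \<le> \<phi> x powr s" using lt phi s by (intro powr_mono2) auto
    hence "\<bar>\<phi> y powr s - \<phi> x powr s\<bar> = \<phi> x powr s - \<phi> y powr s" by simp
    also have "\<dots> \<le> s * \<phi> x powr (s - 1) * (\<phi> x - \<phi> y)"
      using powr_diff_le_s[of "\<phi> y" "\<phi> x" s] phi lt s by simp
    finally show ?thesis .
  qed
  have "\<bar>u y - u x\<bar> powr (m - 1) * (min (u x) (u y)) powr (-t) * \<bar>\<phi> y powr s - \<phi> x powr s\<bar>
      \<le> (sqrt (2 * p0) powr (m - 1) * g x powr (m - 1)) * (K * u x powr (-t)) * (s * \<phi> x powr (s - 1) * (\<phi> x - \<phi> y))"
    using i ii iii K_pos g_nn[of x] p0 by (intro mult_mono mult_nonneg_nonneg) auto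
  also have "\<dots> = C1 s * (g x powr (m - 1) * u x powr (-t) * \<phi> x powr (s - 1) * (\<phi> x - \<phi> y))"
    by (simp add: C1_def algebra_simps)
  finally have "\<bar>u y - u x\<bar> powr (m - 1) * (min (u x) (u y)) powr (-t) * \<bar>\<phi> y powr s - \<phi> x powr s\<bar>
      \<le> C1 s * (g x powr (m - 1) * u x powr (-t) * \<phi> x powr (s - 1) * (\<phi> x - \<phi> y))" .
  hence "mu x y * (\<bar>u y - u x\<bar> powr (m - 1) * (min (u x) (u y)) powr (-t) * \<bar>\<phi> y powr s - \<phi> x powr s\<bar>)
      \<le> mu x y * (C1 s * (g x powr (m - 1) * u x powr (-t) * \<phi> x powr (s - 1) * (\<phi> x - \<phi> y)))"
    using mu_nn[of x y] by (rule mult_left_mono)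
  thus ?thesis by (simp only: mult.left_commute)
qed

end


context sol
begin

lemma KL:
  assumes F: "finite F" and X: "X \<subseteq> F"
    and phi: "\<And>x. 0 \<le> \<phi> x" "\<And>x. \<phi> x \<le> 1"
    and supp: "\<And>x. \<phi> x \<noteq> 0 \<Longrightarrow> x \<in> F \<and> nbrs mu x \<subseteq> F"
    and Xcov: "\<And>x y. adj mu x y \<Longrightarrow> \<phi> y < \<phi> x \<Longrightarrow> x \<in> X"
    and t: "0 < t" "t \<le> 1" and s: "1 \<le> s"
    and par: "0 < \<alpha>" "0 < \<beta>" "0 < \<gamma>" "\<alpha> + \<beta> + \<gamma> = 1"
      "p * \<alpha> - t * \<alpha> - (1 + t) * \<beta> = - t" "q * \<alpha> + m * \<beta> = m - 1" "1 \<le> s * \<gamma>" "lam * \<gamma> = 1"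
  shows "Asum t s \<phi> F \<le> (C1 s * (Asum t s \<phi> X powr \<alpha> * Esum \<phi> lam F powr \<gamma>) * ct t powr (-\<beta>)) powr (1 / (1 - \<beta>))"
proof -
  define \<Phi> where "\<Phi> x = \<phi> x powr s" for x
  define A where "A = Asum t s \<phi> F"
  define AX where "AX = Asum t s \<phi> X"
  define E where "E = Esum \<phi> lam F"
  define B' where "B' = (\<Sum>x\<in>F. vmeasure mu x * g x powr m * u x powr (-1 - t) * \<phi> x powr s)"
  define BB where "BB = (\<Sum>x\<in>F. \<Sum>y\<in>F. mu x y * (\<bar>u y - u x\<bar> powr m * (max (u x) (u y)) powr (-t - 1) * max (\<Phi> x) (\<Phi> y)))"
  define G where "G x y = mu x y * (\<bar>u y - u x\<bar> powr (m - 1) * (min (u x) (u y)) powr (-t) * \<bar>\<Phi> y - \<Phi> x\<bar>)" for x y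
  define T where "T x y = (if \<phi> y < \<phi> x then mu x y * (g x powr (m - 1) * u x powr (-t) * \<phi> x powr (s - 1) * (\<phi> x - \<phi> y)) else 0)" for x y
  have sp: "0 < s" using s by simp
  have Phi_nn: "0 \<le> \<Phi> x" for x by (simp add: \<Phi>_def)
  have suppP: "\<Phi> x \<noteq> 0 \<Longrightarrow> x \<in> F \<and> nbrs mu x \<subseteq> F" for x using supp by (auto simp: \<Phi>_def)
  have M: "A + (t/2) * BB \<le> (1/2) * (\<Sum>x\<in>F. \<Sum>y\<in>F. G x y)"
    using main_ineq[OF F Phi_nn suppP t(1)]
    by (simp add: A_def Asum_def BB_def G_def \<Phi>_def)
  have S1: "B' \<le> K\<^sup>2 * p0 * BB"
  proof -
    have "B' \<le> (\<Sum>x\<in>F. K\<^sup>2 * p0 * (\<Sum>y\<in>F. mu x y * (\<bar>u y - u x\<bar> powr m * (max (u x) (u y)) powr (-t - 1) * max (\<phi> x powr s) (\<phi> y powr s))))"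
      unfolding B'_def using step_B[of F \<phi>, OF F supp phi(1) t sp] by (intro sum_mono) auto
    thus ?thesis by (simp add: BB_def \<Phi>_def sum_distrib_left)
  qed
  have S2: "(\<Sum>x\<in>F. \<Sum>y\<in>F. G x y) = 2 * (\<Sum>x\<in>F. \<Sum>y\<in>F. if \<phi> y < \<phi> x then G x y else 0)"
  proof (rule sym_split[OF F])
    fix x y show "G y x = G x y" by (simp add: G_def mu_sym abs_minus_commute min.commute)
  next
    fix x y :: 'v assume "\<phi> x = \<phi> y" thus "G x y = 0" by (simp add: G_def \<Phi>_def)
  qed
  have S3: "(\<Sum>x\<in>F. \<Sum>y\<in>F. if \<phi> y < \<phi> x then G x y else 0) \<le> C1 s * (\<Sum>x\<in>F. \<Sum>y\<in>F. T x y)"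
  proof -
    have "(\<Sum>x\<in>F. \<Sum>y\<in>F. if \<phi> y < \<phi> x then G x y else 0) \<le> (\<Sum>x\<in>F. \<Sum>y\<in>F. C1 s * T x y)"
    proof (intro sum_mono)
      fix x y
      show "(if \<phi> y < \<phi> x then G x y else 0) \<le> C1 s * T x y"
        using step_S3[where \<phi>=\<phi> and x=x and y=y and t=t and s=s, OF phi _ t s] by (auto simp: G_def T_def \<Phi>_def)
    qed
    thus ?thesis by (simp add: sum_distrib_left)
  qed
  define w :: "'v \<times> 'v \<Rightarrow> real" where "w xy = (if \<phi> (snd xy) < \<phi> (fst xy) then mu (fst xy) (snd xy) else 0)" for xy
  define a :: "'v \<times> 'v \<Rightarrow> real" where "a xy = f (fst xy) * u (fst xy) powr (-t) * \<phi> (fst xy) powr s" for xy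
  define b :: "'v \<times> 'v \<Rightarrow> real" where "b xy = g (fst xy) powr m * u (fst xy) powr (-1 - t) * \<phi> (fst xy) powr s" for xy
  define c :: "'v \<times> 'v \<Rightarrow> real" where "c xy = (if \<phi> (snd xy) < \<phi> (fst xy) then (\<phi> (fst xy) - \<phi> (snd xy)) powr lam else 0)" for xy
  have w_nn: "0 \<le> w xy" for xy by (simp add: w_def mu_nn)
  have a_nn: "0 \<le> a xy" for xy by (simp add: a_def f_nn)
  have b_nn: "0 \<le> b xy" for xy by (simp add: b_def)
  have c_nn: "0 \<le> c xy" for xy by (simp add: c_def)
  have S4a: "(\<Sum>x\<in>F. \<Sum>y\<in>F. T x y) \<le> (\<Sum>xy\<in>F \<times> F. w xy * (a xy powr \<alpha> * b xy powr \<beta> * c xy powr \<gamma>))"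
  proof -
    have "(\<Sum>x\<in>F. \<Sum>y\<in>F. T x y) = (\<Sum>xy\<in>F \<times> F. T (fst xy) (snd xy))"
      by (simp add: sum.cartesian_product split_def)
    also have "\<dots> \<le> (\<Sum>xy\<in>F \<times> F. w xy * (a xy powr \<alpha> * b xy powr \<beta> * c xy powr \<gamma>))"
    proof (intro sum_mono)
      fix xy :: "'v \<times> 'v"
      obtain x y where xy: "xy = (x, y)" by fastforce
      show "T (fst xy) (snd xy) \<le> w xy * (a xy powr \<alpha> * b xy powr \<beta> * c xy powr \<gamma>)"
      proof (cases "\<phi> y < \<phi> x")
        case False thus ?thesis by (simp add: xy T_def w_def)
      next
        case True
        have px: "0 < \<phi> x" using True phi(1)[of y] by simp
        have "g x powr (m - 1) * u x powr (-t) * \<phi> x powr (s - 1) * (\<phi> x - \<phi> y)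
          \<le> (f x * u x powr (-t) * \<phi> x powr s) powr \<alpha> * (g x powr m * u x powr (-1 - t) * \<phi> x powr s) powr \<beta>
             * ((\<phi> x - \<phi> y) powr lam) powr \<gamma>"
          using pw[OF t(1) px phi(2)[of x] _ par, of "\<phi> x - \<phi> y" x] True by simp
        hence "mu x y * (g x powr (m - 1) * u x powr (-t) * \<phi> x powr (s - 1) * (\<phi> x - \<phi> y))
          \<le> mu x y * ((f x * u x powr (-t) * \<phi> x powr s) powr \<alpha> * (g x powr m * u x powr (-1 - t) * \<phi> x powr s) powr \<beta>
             * ((\<phi> x - \<phi> y) powr lam) powr \<gamma>)"
          using mu_nn[of x y] by (rule mult_left_mono)
        thus ?thesis using True by (simp add: xy T_def w_def a_def b_def c_def)
      qed
    qed
    finally show ?thesis .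
  qed
  have S4b: "(\<Sum>xy\<in>F \<times> F. w xy * (a xy powr \<alpha> * b xy powr \<beta> * c xy powr \<gamma>))
      \<le> (\<Sum>xy\<in>F \<times> F. w xy * a xy) powr \<alpha> * (\<Sum>xy\<in>F \<times> F. w xy * b xy) powr \<beta> * (\<Sum>xy\<in>F \<times> F. w xy * c xy) powr \<gamma>"
    using F par w_nn a_nn b_nn c_nn by (intro holder3) auto
  have wa: "(\<Sum>xy\<in>F \<times> F. w xy * a xy) \<le> AX"
  proof -
    have "(\<Sum>xy\<in>F \<times> F. w xy * a xy) = (\<Sum>x\<in>F. \<Sum>y\<in>F. w (x, y) * a (x, y))"
      by (simp add: sum.cartesian_product split_def)
    also have "\<dots> \<le> (\<Sum>x\<in>F. if x \<in> X then vmeasure mu x * (f x * u x powr (-t) * \<phi> x powr s) else 0)"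
    proof (intro sum_mono)
      fix x assume xF: "x \<in> F"
      have eq: "(\<Sum>y\<in>F. w (x, y) * a (x, y)) = (\<Sum>y\<in>F. w (x, y)) * (f x * u x powr (-t) * \<phi> x powr s)"
        by (simp add: a_def sum_distrib_right)
      show "(\<Sum>y\<in>F. w (x, y) * a (x, y)) \<le> (if x \<in> X then vmeasure mu x * (f x * u x powr (-t) * \<phi> x powr s) else 0)"
      proof (cases "x \<in> X")
        case True
        have "(\<Sum>y\<in>F. w (x, y)) \<le> (\<Sum>y\<in>F. mu x y)" by (intro sum_mono) (simp add: w_def mu_nn)
        also have "\<dots> \<le> vmeasure mu x" by (rule sum_F_le_mv[OF F])
        finally show ?thesis unfolding eq using True a_nn[of "(x,x)"]
          by (simp add: mult_right_mono a_def)
      next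
        case False
        have "w (x, y) = 0" for y using Xcov[of x y] False by (auto simp: w_def adj_iff)
        thus ?thesis unfolding eq using False by simp
      qed
    qed
    also have "\<dots> = AX"
      unfolding AX_def Asum_def using X F
      by (simp add: sum.inter_restrict[symmetric] Int_absorb1 mult.assoc)
    finally show ?thesis .
  qed
  have wb: "(\<Sum>xy\<in>F \<times> F. w xy * b xy) \<le> B'"
  proof -
    have "(\<Sum>xy\<in>F \<times> F. w xy * b xy) = (\<Sum>x\<in>F. \<Sum>y\<in>F. w (x, y) * b (x, y))"
      by (simp add: sum.cartesian_product split_def)
    also have "\<dots> \<le> (\<Sum>x\<in>F. vmeasure mu x * (g x powr m * u x powr (-1 - t) * \<phi> x powr s))"
    proof (intro sum_mono)
      fix x
      have eq: "(\<Sum>y\<in>F. w (x, y) * b (x, y)) = (\<Sum>y\<in>F. w (x, y)) * (g x powr m * u x powr (-1 - t) * \<phi> x powr s)"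
        by (simp add: b_def sum_distrib_right)
      have "(\<Sum>y\<in>F. w (x, y)) \<le> (\<Sum>y\<in>F. mu x y)" by (intro sum_mono) (simp add: w_def mu_nn)
      also have "\<dots> \<le> vmeasure mu x" by (rule sum_F_le_mv[OF F])
      finally show "(\<Sum>y\<in>F. w (x, y) * b (x, y)) \<le> vmeasure mu x * (g x powr m * u x powr (-1 - t) * \<phi> x powr s)"
        unfolding eq by (intro mult_right_mono) auto
    qed
    also have "\<dots> = B'" by (simp add: B'_def mult.assoc)
    finally show ?thesis .
  qed
  have wc: "(\<Sum>xy\<in>F \<times> F. w xy * c xy) = E"
  proof -
    have "(\<Sum>xy\<in>F \<times> F. w xy * c xy) = (\<Sum>x\<in>F. \<Sum>y\<in>F. w (x, y) * c (x, y))"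
      by (simp add: sum.cartesian_product split_def)
    also have "\<dots> = E" unfolding E_def Esum_def
      by (intro sum.cong refl) (simp add: w_def c_def)
    finally show ?thesis .
  qed
  have B'_nn: "0 \<le> B'" unfolding B'_def using mv_pos by (intro sum_nonneg mult_nonneg_nonneg) (auto intro: less_imp_le)
  have AX_nn: "0 \<le> AX" by (simp add: AX_def Asum_nn)
  have E_nn: "0 \<le> E" by (simp add: E_def Esum_nn)
  have S4: "(\<Sum>x\<in>F. \<Sum>y\<in>F. T x y) \<le> AX powr \<alpha> * B' powr \<beta> * E powr \<gamma>"
  proof -
    have "(\<Sum>xy\<in>F \<times> F. w xy * a xy) powr \<alpha> \<le> AX powr \<alpha>"
      using wa par by (intro powr_mono2) (auto intro!: sum_nonneg mult_nonneg_nonneg w_nn a_nn)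
    moreover have "(\<Sum>xy\<in>F \<times> F. w xy * b xy) powr \<beta> \<le> B' powr \<beta>"
      using wb par by (intro powr_mono2) (auto intro!: sum_nonneg mult_nonneg_nonneg w_nn b_nn)
    ultimately have "(\<Sum>xy\<in>F \<times> F. w xy * a xy) powr \<alpha> * (\<Sum>xy\<in>F \<times> F. w xy * b xy) powr \<beta> * (\<Sum>xy\<in>F \<times> F. w xy * c xy) powr \<gamma>
        \<le> AX powr \<alpha> * B' powr \<beta> * E powr \<gamma>"
      unfolding wc by (intro mult_mono) auto
    thus ?thesis using S4a S4b by linarith
  qed
  have ctp: "0 < ct t" using t K_pos p0 by (simp add: ct_def)
  have C1_nn: "0 \<le> C1 s" using K_pos p0 s by (simp add: C1_def)
  have final: "A + ct t * B' \<le> C1 s * (AX powr \<alpha> * E powr \<gamma>) * B' powr \<beta>"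
  proof -
    have "ct t * B' \<le> (t/2) * BB"
    proof -
      have "ct t * B' \<le> ct t * (K\<^sup>2 * p0 * BB)" using S1 ctp by (intro mult_left_mono) auto
      also have "\<dots> = (t/2) * BB" using K_pos p0 by (simp add: ct_def field_simps)
      finally show ?thesis .
    qed
    hence "A + ct t * B' \<le> (1/2) * (\<Sum>x\<in>F. \<Sum>y\<in>F. G x y)" using M by linarith
    also have "\<dots> \<le> C1 s * (\<Sum>x\<in>F. \<Sum>y\<in>F. T x y)" using S2 S3 by simp
    also have "\<dots> \<le> C1 s * (AX powr \<alpha> * B' powr \<beta> * E powr \<gamma>)" using S4 C1_nn by (intro mult_left_mono)
    finally show ?thesis by (simp add: algebra_simps)
  qed
  have A_nn: "0 \<le> A" by (simp add: A_def Asum_nn)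
  have "A \<le> (C1 s * (AX powr \<alpha> * E powr \<gamma>) * ct t powr (-\<beta>)) powr (1 / (1 - \<beta>))"
  proof (rule absorb[OF A_nn B'_nn ctp _ _ par(2) _ final])
    show "0 \<le> C1 s" by (rule C1_nn)
    show "0 \<le> AX powr \<alpha> * E powr \<gamma>" by simp
    show "\<beta> < 1" using par by linarith
  qed
  thus ?thesis by (simp add: A_def AX_def E_def)
qed

end


context wgraph
begin

definition mplus :: "'v \<Rightarrow> real" where
  "mplus x = (\<Sum>y\<in>nbrs mu x. if r x < r y then mu x y else 0)"

definition wl :: "nat \<Rightarrow> real" where
  "wl k = (\<Sum>x\<in>{x. x \<in> B k \<and> r x = k}. mplus x)"

lemma mplus_nn: "0 \<le> mplus x" unfolding mplus_def by (intro sum_nonneg) (simp add: mu_nn)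
lemma wl_nn: "0 \<le> wl k" unfolding wl_def by (intro sum_nonneg) (simp add: mplus_nn)

lemma W_eq: "W mu x0 n = (\<Sum>x\<in>B n. mplus x)"
proof -
  have S: "{(x, y). x \<in> gball mu x0 n \<and> adj mu x y \<and> gdist mu x0 x < gdist mu x0 y}
      = (SIGMA x:B n. {y \<in> nbrs mu x. r x < r y})"
    by (auto simp: B_def r_def nbrs_iff)
  have "W mu x0 n = (\<Sum>(x, y)\<in>(SIGMA x:B n. {y \<in> nbrs mu x. r x < r y}). mu x y)"
    unfolding W_def S ..
  also have "\<dots> = (\<Sum>x\<in>B n. \<Sum>y\<in>{y \<in> nbrs mu x. r x < r y}. mu x y)"
    using B_fin nbrs_fin by (subst sum.Sigma) auto
  also have "\<dots> = (\<Sum>x\<in>B n. mplus x)"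
    unfolding mplus_def using nbrs_fin by (intro sum.cong[OF refl] sum.inter_filter) auto
  finally show ?thesis .
qed

lemma sum_levels:
  shows "(\<Sum>x\<in>B j. mplus x * hh (r x)) = (\<Sum>k\<in>{..j}. wl k * hh k)"
proof -
  have "(\<Sum>x\<in>B j. mplus x * hh (r x)) = (\<Sum>k\<in>{..j}. \<Sum>x\<in>{x. x \<in> B j \<and> r x = k}. mplus x * hh (r x))"
    using B_fin by (intro sum.group[symmetric]) (auto simp: B_mem)
  also have "\<dots> = (\<Sum>k\<in>{..j}. wl k * hh k)"
  proof (intro sum.cong refl)
    fix k assume "k \<in> {..j}"
    hence "{x. x \<in> B j \<and> r x = k} = {x. x \<in> B k \<and> r x = k}" by (auto simp: B_mem)
    thus "(\<Sum>x\<in>{x. x \<in> B j \<and> r x = k}. mplus x * hh (r x)) = wl k * hh k"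
      by (simp add: wl_def sum_distrib_right)
  qed
  finally show ?thesis .
qed

lemma W_levels: "W mu x0 j = (\<Sum>k\<in>{..j}. wl k)"
  using sum_levels[of "\<lambda>_. 1" j] by (simp add: W_eq)

lemma radial_E:
  fixes \<psi> :: "nat \<Rightarrow> real"
  assumes mono: "\<And>k. \<psi> (Suc k) \<le> \<psi> k" and lam: "0 < lam"
  shows "(\<Sum>x\<in>B N. \<Sum>y\<in>B N. if \<psi> (r y) < \<psi> (r x) then mu x y * (\<psi> (r x) - \<psi> (r y)) powr lam else 0)
    \<le> (\<Sum>k\<in>{..N}. wl k * (\<psi> k - \<psi> (Suc k)) powr lam)"
proof -
  have monok: "\<psi> j \<le> \<psi> i" if "i \<le> j" for i j
    using that by (induction j) (auto intro: order_trans[OF mono] simp: le_Suc_eq)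
  have "(\<Sum>x\<in>B N. \<Sum>y\<in>B N. if \<psi> (r y) < \<psi> (r x) then mu x y * (\<psi> (r x) - \<psi> (r y)) powr lam else 0)
      \<le> (\<Sum>x\<in>B N. mplus x * (\<psi> (r x) - \<psi> (Suc (r x))) powr lam)"
  proof (intro sum_mono)
    fix x
    define dd where "dd = (\<psi> (r x) - \<psi> (Suc (r x))) powr lam"
    have dd: "0 \<le> dd" by (simp add: dd_def)
    have "(\<Sum>y\<in>B N. if \<psi> (r y) < \<psi> (r x) then mu x y * (\<psi> (r x) - \<psi> (r y)) powr lam else 0)
        \<le> (\<Sum>y\<in>B N. (if r x < r y then mu x y else 0) * dd)"
    proof (intro sum_mono)
      fix y
      show "(if \<psi> (r y) < \<psi> (r x) then mu x y * (\<psi> (r x) - \<psi> (r y)) powr lam else 0) \<le> (if r x < r y then mu x y else 0) * dd"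
      proof (cases "adj mu x y \<and> \<psi> (r y) < \<psi> (r x)")
        case True
        have "r x < r y" using True monok[of "r y" "r x"] by (cases "r y \<le> r x") auto
        hence "r y = Suc (r x)" using r_adj[of x y] True by simp
        thus ?thesis using True \<open>r x < r y\<close> by (simp add: dd_def)
      next
        case False
        thus ?thesis using dd mu_nn[of x y] by (auto simp: adj_iff)
      qed
    qed
    also have "\<dots> = (\<Sum>y\<in>B N. if r x < r y then mu x y else 0) * dd" by (simp add: sum_distrib_right)
    also have "\<dots> \<le> mplus x * dd"
    proof (intro mult_right_mono dd)
      have "(\<Sum>y\<in>B N. if r x < r y then mu x y else 0) = (\<Sum>y\<in>B N \<inter> nbrs mu x. if r x < r y then mu x y else 0)"
        using B_fin by (intro sum.mono_neutral_right) (auto simp: nbrs_iff adj_iff)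
      also have "\<dots> \<le> mplus x"
        unfolding mplus_def using nbrs_fin by (intro sum_mono2) (auto simp: mu_nn)
      finally show "(\<Sum>y\<in>B N. if r x < r y then mu x y else 0) \<le> mplus x" .
    qed
    finally show "(\<Sum>y\<in>B N. if \<psi> (r y) < \<psi> (r x) then mu x y * (\<psi> (r x) - \<psi> (r y)) powr lam else 0)
        \<le> mplus x * (\<psi> (r x) - \<psi> (Suc (r x))) powr lam" by (simp add: dd_def)
  qed
  also have "\<dots> = (\<Sum>k\<in>{..N}. wl k * (\<psi> k - \<psi> (Suc k)) powr lam)"
    by (rule sum_levels)
  finally show ?thesis .
qed

end


lemma abel_ident:
  fixes a h :: "nat \<Rightarrow> real"
  shows "(\<Sum>k\<in>{n0..n0 + d}. a k * h k)
    = h (n0 + d) * (\<Sum>k\<in>{n0..n0 + d}. a k) + (\<Sum>j\<in>{n0..<n0 + d}. (h j - h (Suc j)) * (\<Sum>k\<in>{n0..j}. a k))"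
proof (induction d)
  case 0 thus ?case by simp
next
  case (Suc d)
  have "(\<Sum>k\<in>{n0..n0 + Suc d}. a k * h k) = (\<Sum>k\<in>{n0..n0 + d}. a k * h k) + a (Suc (n0 + d)) * h (Suc (n0 + d))"
    by simp
  also have "\<dots> = h (n0 + d) * (\<Sum>k\<in>{n0..n0 + d}. a k) + (\<Sum>j\<in>{n0..<n0 + d}. (h j - h (Suc j)) * (\<Sum>k\<in>{n0..j}. a k))
      + a (Suc (n0 + d)) * h (Suc (n0 + d))" using Suc by simp
  also have "\<dots> = h (n0 + Suc d) * (\<Sum>k\<in>{n0..n0 + Suc d}. a k) + (\<Sum>j\<in>{n0..<n0 + Suc d}. (h j - h (Suc j)) * (\<Sum>k\<in>{n0..j}. a k))"
    by (simp add: algebra_simps)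
  finally show ?case .
qed

lemma abel_le:
  fixes a h :: "nat \<Rightarrow> real"
  assumes a: "\<And>k. 0 \<le> a k" and h: "\<And>j. n0 \<le> j \<Longrightarrow> h (Suc j) \<le> h j" "\<And>j. 0 \<le> h j" and le: "n0 \<le> N1"
  shows "(\<Sum>k\<in>{n0..N1}. a k * h k)
    \<le> h N1 * (\<Sum>k\<in>{..N1}. a k) + (\<Sum>j\<in>{n0..<N1}. (h j - h (Suc j)) * (\<Sum>k\<in>{..j}. a k))"
proof -
  obtain d where d: "N1 = n0 + d" using le by (metis le_add_diff_inverse)
  have T: "(\<Sum>k\<in>{n0..j}. a k) \<le> (\<Sum>k\<in>{..j}. a k)" for j
    using a by (intro sum_mono2) auto
  have "(\<Sum>k\<in>{n0..N1}. a k * h k)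
    = h N1 * (\<Sum>k\<in>{n0..N1}. a k) + (\<Sum>j\<in>{n0..<N1}. (h j - h (Suc j)) * (\<Sum>k\<in>{n0..j}. a k))"
    using abel_ident[of a h n0 d] d by simp
  also have "\<dots> \<le> h N1 * (\<Sum>k\<in>{..N1}. a k) + (\<Sum>j\<in>{n0..<N1}. (h j - h (Suc j)) * (\<Sum>k\<in>{..j}. a k))"
    using T h by (intro add_mono mult_left_mono sum_mono) auto
  finally show ?thesis .
qed

lemma inv_le_ln_diff:
  fixes j :: real assumes "1 < j"
  shows "1 / j \<le> ln j - ln (j - 1)"
proof -
  have "ln ((j - 1) / j) \<le> (j - 1) / j - 1" using assms by (intro ln_le_minus_one) auto
  moreover have "ln ((j - 1) / j) = ln (j - 1) - ln j" using assms by (simp add: ln_div)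
  moreover have "(j - 1) / j - 1 = - (1 / j)" using assms by (simp add: field_simps)
  ultimately show ?thesis by linarith
qed

lemma harmonic_le:
  fixes n :: nat assumes "2 \<le> n"
  shows "(\<Sum>j\<in>{n..n + d}. 1 / real j) \<le> ln (real (n + d)) - ln (real n - 1)"
proof (induction d)
  case 0 thus ?case using inv_le_ln_diff[of "real n"] assms by simp
next
  case (Suc d)
  have "1 / real (n + Suc d) \<le> ln (real (n + Suc d)) - ln (real (n + Suc d) - 1)"
    using inv_le_ln_diff[of "real (n + Suc d)"] assms by simp
  moreover have "real (n + Suc d) - 1 = real (n + d)" by simp
  ultimately show ?case using Suc by simp
qed

lemma harmonic_le2:
  fixes n N :: nat assumes "2 \<le> n" "n \<le> N"
  shows "(\<Sum>j\<in>{n..N}. 1 / real j) \<le> ln (real N)"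
proof -
  obtain d where d: "N = n + d" using assms by (metis le_add_diff_inverse)
  have "(\<Sum>j\<in>{n..N}. 1 / real j) \<le> ln (real N) - ln (real n - 1)"
    using harmonic_le[OF assms(1), of d] d by simp
  moreover have "0 \<le> ln (real n - 1)" using assms by simp
  ultimately show ?thesis by linarith
qed

definition psi :: "nat \<Rightarrow> nat \<Rightarrow> real" where
  "psi n k = min 1 (max 0 (2 - ln (real k) / ln (real n)))"

lemma psi_01: "0 \<le> psi n k" "psi n k \<le> 1" by (auto simp: psi_def)

lemma psi_mono: assumes "2 \<le> n" shows "psi n (Suc k) \<le> psi n k"
proof (cases "k = 0")
  case True thus ?thesis by (simp add: psi_def)
next
  case False
  have ln: "0 < ln (real n)" using assms by simp
  have "ln (real k) \<le> ln (real (Suc k))" using False by simp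
  hence "ln (real k) / ln (real n) \<le> ln (real (Suc k)) / ln (real n)" using ln by (simp add: divide_right_mono)
  thus ?thesis unfolding psi_def by linarith
qed

lemma psi_one: assumes "2 \<le> n" "k \<le> n" shows "psi n k = 1"
proof (cases "k = 0")
  case True thus ?thesis by (simp add: psi_def)
next
  case False
  have ln: "0 < ln (real n)" using assms by simp
  have "ln (real k) \<le> ln (real n)" using False assms by simp
  hence "ln (real k) / ln (real n) \<le> 1" using ln by simp
  thus ?thesis unfolding psi_def by simp
qed

lemma psi_zero: assumes "2 \<le> n" "n\<^sup>2 \<le> k" shows "psi n k = 0"
proof -
  have ln: "0 < ln (real n)" using assms by simp
  have kp: "0 < real k" using assms by (metis of_nat_0_less_iff order_less_le_trans pos2 power_eq_0_iff zero_less_power less_le_trans gr0I le_0_eq not_numeral_le_zero)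
  have "ln (real (n\<^sup>2)) \<le> ln (real k)" using assms kp by simp
  moreover have "ln (real (n\<^sup>2)) = 2 * ln (real n)" using assms by (simp add: ln_realpow)
  ultimately have "2 \<le> ln (real k) / ln (real n)" using ln by (simp add: le_divide_eq)
  thus ?thesis unfolding psi_def by simp
qed

lemma clip_lip: "min 1 (max 0 a) - min 1 (max 0 b) \<le> max 0 (a - b)" for a b :: real
  by (simp add: min_def max_def)

lemma psi_diff: assumes "2 \<le> n" "1 \<le> k" shows "psi n k - psi n (Suc k) \<le> 1 / (real k * ln (real n))"
proof -
  have ln: "0 < ln (real n)" using assms by simp
  have lk: "ln (real (Suc k)) - ln (real k) \<le> 1 / real k"
  proof -
    have e: "1 + 1 / real k = real (Suc k) / real k" using assms by (simp add: field_simps)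
    have "ln (real (Suc k)) - ln (real k) = ln (1 + 1 / real k)" unfolding e using assms by (simp add: ln_div)
    also have "\<dots> \<le> 1 / real k" using assms by (intro ln_add_one_self_le_self) auto
    finally show ?thesis .
  qed
  have "(ln (real (Suc k)) - ln (real k)) / ln (real n) \<le> (1 / real k) / ln (real n)"
    using ln lk by (intro divide_right_mono) auto
  hence B: "(ln (real (Suc k)) - ln (real k)) / ln (real n) \<le> 1 / (real k * ln (real n))" by simp
  have "psi n k - psi n (Suc k) \<le> max 0 ((2 - ln (real k) / ln (real n)) - (2 - ln (real (Suc k)) / ln (real n)))"
    unfolding psi_def by (rule clip_lip)
  also have "(2 - ln (real k) / ln (real n)) - (2 - ln (real (Suc k)) / ln (real n)) = (ln (real (Suc k)) - ln (real k)) / ln (real n)"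
    by (simp add: diff_divide_distrib)
  also have "max 0 ((ln (real (Suc k)) - ln (real k)) / ln (real n)) \<le> 1 / (real k * ln (real n))"
    using B ln assms by (simp add: max_def)
  finally show ?thesis .
qed

lemma psi_diff_nn: assumes "2 \<le> n" shows "0 \<le> psi n k - psi n (Suc k)" using psi_mono[OF assms] by simp


context wgraph
begin

lemma W_nn: "0 \<le> W mu x0 j" unfolding W_levels by (intro sum_nonneg) (simp add: wl_nn)

lemma E_crit:
  fixes n n1 :: nat and Cw \<gamma> \<delta> lam a :: real
  assumes n: "3 \<le> n" "n1 \<le> n" and Cw: "0 < Cw"
    and Wb: "\<And>j. n1 \<le> j \<Longrightarrow> W mu x0 j \<le> Cw * real j powr \<gamma> * ln (real j) powr \<delta>"
    and lam: "0 < lam" and ga: "(\<gamma> - lam) * ln (real n) = a" "0 \<le> \<gamma> - lam" and \<delta>: "0 \<le> \<delta>"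
  shows "(\<Sum>k\<in>{..n\<^sup>2}. wl k * (psi n k - psi n (Suc k)) powr lam)
    \<le> ln (real n) powr (-lam) * (Cw * exp (2 * a) * 2 powr \<delta> * ln (real n) powr \<delta>) * (1 + 2 * lam * ln (real n))"
proof -
  define N where "N = n\<^sup>2"
  define L where "L = ln (real n)"
  define Q where "Q = Cw * exp (2 * a) * 2 powr \<delta> * L powr \<delta>"
  define h where "h k = real k powr (-lam)" for k :: nat
  have n2: "2 \<le> n" using n by simp
  have Lp: "0 < L" using n by (simp add: L_def)
  have nN: "n + 1 \<le> N - 1"
  proof -
    have "n * 3 \<le> n * n" using n by (intro mult_le_mono2) auto
    hence "n + 1 \<le> n * n - 1" using n by linarith
    thus ?thesis by (simp add: N_def power2_eq_square)
  qed
  have lnN: "ln (real N) = 2 * L" using n by (simp add: N_def L_def ln_realpow)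
  have Q_nn: "0 \<le> Q" using Cw by (simp add: Q_def)
  have dd0: "(psi n k - psi n (Suc k)) powr lam = 0" if "k \<in> {..N} - {n..N-1}" for k
  proof -
    from that have "k < n \<or> N \<le> k" by auto
    thus ?thesis
    proof
      assume "k < n" thus ?thesis using psi_one[OF n2, of k] psi_one[OF n2, of "Suc k"] by simp
    next
      assume "N \<le> k" thus ?thesis using psi_zero[OF n2, of k] psi_zero[OF n2, of "Suc k"] by (simp add: N_def)
    qed
  qed
  have "(\<Sum>k\<in>{..n\<^sup>2}. wl k * (psi n k - psi n (Suc k)) powr lam) = (\<Sum>k\<in>{n..N-1}. wl k * (psi n k - psi n (Suc k)) powr lam)"
    unfolding N_def[symmetric] using dd0 by (intro sum.mono_neutral_right) auto
  also have "\<dots> \<le> (\<Sum>k\<in>{n..N-1}. wl k * (L powr (-lam) * h k))"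
  proof (intro sum_mono mult_left_mono wl_nn)
    fix k assume k: "k \<in> {n..N-1}"
    hence k1: "1 \<le> k" using n by auto
    have "(psi n k - psi n (Suc k)) powr lam \<le> (1 / (real k * L)) powr lam"
      using psi_diff[OF n2 k1] psi_diff_nn[OF n2, of k] lam by (intro powr_mono2) (auto simp: L_def)
    also have "\<dots> = L powr (-lam) * h k" using Lp k1
      by (simp add: h_def powr_divide powr_mult powr_minus_divide)
    finally show "(psi n k - psi n (Suc k)) powr lam \<le> L powr (-lam) * h k" .
  qed
  also have "\<dots> = L powr (-lam) * (\<Sum>k\<in>{n..N-1}. wl k * h k)"
    by (simp add: sum_distrib_left algebra_simps)
  also have "(\<Sum>k\<in>{n..N-1}. wl k * h k) \<le> h (N-1) * (\<Sum>k\<in>{..N-1}. wl k) + (\<Sum>j\<in>{n..<N-1}. (h j - h (Suc j)) * (\<Sum>k\<in>{..j}. wl k))"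
  proof (rule abel_le)
    show "\<And>k. 0 \<le> wl k" by (rule wl_nn)
    show "\<And>j. n \<le> j \<Longrightarrow> h (Suc j) \<le> h j" unfolding h_def using n lam by (intro powr_mono2') auto
    show "\<And>j. 0 \<le> h j" by (simp add: h_def)
    show "n \<le> N - 1" using nN by simp
  qed
  also have "\<dots> = h (N-1) * W mu x0 (N-1) + (\<Sum>j\<in>{n..<N-1}. (h j - h (Suc j)) * W mu x0 j)"
    by (simp add: W_levels)
  also have "\<dots> \<le> Q + (\<Sum>j\<in>{n..<N-1}. lam * Q * (1 / real j))"
  proof -
    have hW: "h j * W mu x0 j \<le> Q" if j: "n \<le> j" "j \<le> N - 1" for j
    proof -
      have jp: "3 \<le> real j" using j n by simp
      have "h j * W mu x0 j \<le> h j * (Cw * real j powr \<gamma> * ln (real j) powr \<delta>)"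
        using Wb[of j] j n by (intro mult_left_mono) (auto simp: h_def)
      also have "\<dots> = Cw * real j powr (\<gamma> - lam) * ln (real j) powr \<delta>"
        using jp by (simp add: h_def powr_diff powr_minus_divide field_simps)
      also have "\<dots> \<le> Cw * exp (2 * a) * (2 powr \<delta> * L powr \<delta>)"
      proof -
        have "real j powr (\<gamma> - lam) \<le> real N powr (\<gamma> - lam)" using j jp ga by (intro powr_mono2) auto
        also have "\<dots> = exp (2 * a)" using n ga lnN
          by (simp add: powr_def N_def L_def algebra_simps)
        finally have 1: "real j powr (\<gamma> - lam) \<le> exp (2 * a)" .
        have "ln (real j) powr \<delta> \<le> ln (real N) powr \<delta>" using j jp \<delta> by (intro powr_mono2) auto
        also have "\<dots> = 2 powr \<delta> * L powr \<delta>" using lnN Lp by (simp add: powr_mult)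
        finally have 2: "ln (real j) powr \<delta> \<le> 2 powr \<delta> * L powr \<delta>" .
        show ?thesis using 1 2 Cw by (simp add: mult.assoc) (intro mult_left_mono mult_mono, auto)
      qed
      finally show ?thesis by (simp add: Q_def algebra_simps)
    qed
    have 1: "h (N-1) * W mu x0 (N-1) \<le> Q" using hW nN by simp
    have 2: "(h j - h (Suc j)) * W mu x0 j \<le> lam * Q * (1 / real j)" if j: "j \<in> {n..<N-1}" for j
    proof -
      have jp: "0 < real j" using j n by simp
      have "h j - h (Suc j) \<le> lam * (real j) powr (-lam - 1)"
        using powr_neg_diff_le[of "real j" lam] jp lam by (simp add: h_def add.commute)
      also have "\<dots> = lam * h j * (1 / real j)" using jp by (simp add: h_def powr_diff powr_minus_divide)
      finally have "(h j - h (Suc j)) * W mu x0 j \<le> lam * h j * (1 / real j) * W mu x0 j"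
        using W_nn by (intro mult_right_mono) auto
      also have "\<dots> = lam * (1 / real j) * (h j * W mu x0 j)" by (simp add: algebra_simps)
      also have "\<dots> \<le> lam * (1 / real j) * Q" using hW[of j] j lam jp by (intro mult_left_mono) auto
      finally show ?thesis by (simp add: algebra_simps)
    qed
    show ?thesis using 1 2 by (intro add_mono sum_mono) auto
  qed
  also have "(\<Sum>j\<in>{n..<N-1}. lam * Q * (1 / real j)) \<le> lam * Q * (2 * L)"
  proof -
    have "(\<Sum>j\<in>{n..<N-1}. lam * Q * (1 / real j)) = lam * Q * (\<Sum>j\<in>{n..<N-1}. 1 / real j)"
      by (simp add: sum_distrib_left)
    also have "(\<Sum>j\<in>{n..<N-1}. 1 / real j) \<le> (\<Sum>j\<in>{n..N-1}. 1 / real j)" by (intro sum_mono2) auto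
    also have "\<dots> \<le> ln (real (N-1))" using harmonic_le2[OF n2, of "N-1"] nN by simp
    also have "\<dots> \<le> ln (real N)" using nN by simp
    also have "\<dots> = 2 * L" by (rule lnN)
    finally show ?thesis using lam Q_nn by (simp add: mult_left_mono)
  qed
  finally have "(\<Sum>k\<in>{..n\<^sup>2}. wl k * (psi n k - psi n (Suc k)) powr lam) \<le> L powr (-lam) * (Q + lam * Q * (2 * L))"
    by (simp add: mult_left_mono)
  thus ?thesis by (simp add: Q_def L_def algebra_simps)
qed

end


context sol
begin

definition "rho = p + q - m + 1"
definition "D0 = m * p + q"
definition "Dt t = D0 - t * (m - q)"
definition "gam = D0 / rho"
definition "del = (m - 1) / rho"
definition "al t = (m - 1 - t) / Dt t"
definition "be t = (m - 1 - al t * q) / m"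
definition "ga t = rho / Dt t"
definition "la t = Dt t / rho"
definition "ka t = be t * la t"
definition "t0 = min (1/2) (min ((m - 1) / 2) (D0 / (2 * (m - q))))"

lemma rho_pos: "0 < rho" using q_lo by (simp add: rho_def)
lemma mq_pos: "0 < m - q" using q_hi by simp
lemma D0_pos: "0 < D0"
proof -
  have "m * p + q > m * p + (m - 1 - p)" using q_lo by simp
  moreover have "m * p + (m - 1 - p) = (m - 1) * (p + 1)" by (simp add: algebra_simps)
  moreover have "0 < (m - 1) * (p + 1)" using m1 p_nn by simp
  ultimately show ?thesis by (simp add: D0_def)
qed
lemma t0_pos: "0 < t0" using m1 D0_pos mq_pos by (simp add: t0_def)
lemma t0_le1: "t0 \<le> 1/2" unfolding t0_def by (rule min.cobounded1)
lemma t0_le2: "t0 \<le> (m - 1) / 2" unfolding t0_def by (rule order_trans[OF min.cobounded2 min.cobounded1])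
lemma t0_le3: "t0 \<le> D0 / (2 * (m - q))" unfolding t0_def by (rule order_trans[OF min.cobounded2 min.cobounded2])
lemmas t0_le = t0_le1 t0_le2 t0_le3
lemma m_nz: "m \<noteq> 0" using m1 by simp

lemma gam_gt_m: "m < gam"
proof -
  have "D0 - m * rho = (m - 1) * (m - q)" by (simp add: D0_def rho_def algebra_simps)
  hence "0 < D0 - m * rho" using m1 mq_pos by simp
  thus ?thesis using rho_pos by (simp add: gam_def field_simps)
qed
lemma gam_ge1: "1 \<le> gam" using gam_gt_m m1 by simp
lemma del_nn: "0 \<le> del" using m1 rho_pos by (simp add: del_def)

context
  fixes t :: real assumes t: "0 < t" "t \<le> t0"
begin

lemma Dt_ge: "D0 / 2 \<le> Dt t"
proof -
  have "t \<le> D0 / (2 * (m - q))" using t t0_le(3) by simp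
  hence "t * (2 * (m - q)) \<le> D0" using mq_pos by (simp add: pos_le_divide_eq)
  hence "t * (m - q) \<le> D0 / 2" by (simp add: algebra_simps)
  thus ?thesis by (simp add: Dt_def)
qed
lemma Dt_pos: "0 < Dt t" using Dt_ge D0_pos by simp
lemma Dt_le: "Dt t \<le> D0" using t mq_pos by (simp add: Dt_def)
lemma t_le: "t \<le> 1/2" "t \<le> (m - 1) / 2" using t t0_le by auto

lemma al_pos: "0 < al t" using Dt_pos t_le m1 by (simp add: al_def)
lemma ga_pos: "0 < ga t" using Dt_pos rho_pos by (simp add: ga_def)
lemma la_pos: "0 < la t" using Dt_pos rho_pos by (simp add: la_def)
lemma la_ga: "la t * ga t = 1" using Dt_pos rho_pos by (simp add: la_def ga_def)

lemma al_Dt: "al t * Dt t = m - 1 - t" using Dt_pos by (simp add: al_def)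

lemma be_m: "be t * m = m - 1 - al t * q" using m_nz by (simp add: be_def)

lemma be_formula: "be t * m * Dt t = m * ((m - 1) * p - t * (m - 1 - q))"
proof -
  have "be t * m * Dt t = (m - 1) * Dt t - q * (al t * Dt t)" unfolding be_m by (simp add: algebra_simps)
  also have "\<dots> = (m - 1) * Dt t - q * (m - 1 - t)" by (simp add: al_Dt)
  also have "\<dots> = m * ((m - 1) * p - t * (m - 1 - q))" by (simp add: Dt_def D0_def algebra_simps)
  finally show ?thesis .
qed

lemma be_pos: "0 < be t"
proof -
  have key: "0 < (m - 1) * p - t * (m - 1 - q)"
  proof (cases "m - 1 - q \<le> 0")
    case True
    show ?thesis
    proof (cases "m - 1 - q = 0")
      case True
      hence "0 < p" using q_lo by simp
      thus ?thesis using True m1 by simp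
    next
      case False
      hence "t * (m - 1 - q) < 0" using True t by (simp add: mult_pos_neg)
      moreover have "0 \<le> (m - 1) * p" using m1 p_nn by simp
      ultimately show ?thesis by linarith
    qed
  next
    case False
    have "(m - 1) * (m - 1 - q) < (m - 1) * p" using q_lo m1 by simp
    moreover have "t * (m - 1 - q) \<le> (m - 1) * (m - 1 - q)" using False t_le m1 by (intro mult_right_mono) auto
    ultimately show ?thesis by linarith
  qed
  have "0 < m * ((m - 1) * p - t * (m - 1 - q))" using key m1 by simp
  hence pos: "0 < be t * (m * Dt t)" using be_formula by (simp only: mult.assoc)
  show ?thesis
  proof (rule ccontr)
    assume "\<not> 0 < be t"
    hence "be t * (m * Dt t) \<le> 0" using m1 Dt_pos by (intro mult_nonpos_nonneg) auto
    thus False using pos by simp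
  qed
qed

lemma sum1: "al t + be t + ga t = 1"
proof -
  have "(al t + be t + ga t) * (m * Dt t) = m * (al t * Dt t) + be t * m * Dt t + m * rho"
    using Dt_pos by (simp add: ga_def algebra_simps)
  also have "\<dots> = 1 * (m * Dt t)"
    unfolding al_Dt be_formula by (simp add: Dt_def D0_def rho_def algebra_simps)
  finally show ?thesis using m1 Dt_pos mult_right_cancel[of "m * Dt t" "al t + be t + ga t" 1] by simp
qed

lemma id_u: "p * al t - t * al t - (1 + t) * be t = - t"
proof -
  have "(p * al t - t * al t - (1 + t) * be t) * (m * Dt t) = m * (p - t) * (al t * Dt t) - (1 + t) * (be t * m * Dt t)"
    by (simp add: algebra_simps)
  also have "\<dots> = (- t) * (m * Dt t)"
    unfolding al_Dt be_formula by (simp add: Dt_def D0_def algebra_simps)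
  finally show ?thesis using m1 Dt_pos mult_right_cancel[of "m * Dt t" "p * al t - t * al t - (1 + t) * be t" "- t"] by simp
qed

lemma id_g: "q * al t + m * be t = m - 1" using be_m by (simp add: algebra_simps)

lemma s_ga: "1 \<le> gam * ga t"
proof -
  have "gam * ga t = D0 / Dt t" using rho_pos by (simp add: gam_def ga_def)
  thus ?thesis using Dt_le Dt_pos by simp
qed

lemma la_le: "la t \<le> gam" using Dt_le rho_pos by (simp add: la_def gam_def divide_right_mono)
lemma gam_la: "gam - la t = t * (m - q) / rho" by (simp add: gam_def la_def Dt_def diff_divide_distrib)

lemma ka_formula: "ka t = ((m - 1) * p - t * (m - 1 - q)) / rho"
proof -
  have "m * (be t * Dt t) = m * ((m - 1) * p - t * (m - 1 - q))" using be_formula by (simp add: algebra_simps)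
  hence "be t * Dt t = (m - 1) * p - t * (m - 1 - q)" using m_nz by simp
  thus ?thesis by (simp add: ka_def la_def)
qed

lemma ka_exp: "ka t - la t + del + 1 = t / rho"
proof -
  have "ka t - la t + del + 1 = ((m - 1) * p - t * (m - 1 - q) - Dt t + (m - 1) + rho) / rho"
    unfolding ka_formula la_def del_def using rho_pos by (simp add: field_simps)
  also have "(m - 1) * p - t * (m - 1 - q) - Dt t + (m - 1) + rho = t"
    by (simp add: Dt_def D0_def rho_def algebra_simps)
  finally show ?thesis .
qed

lemma ga_ka: "ga t * ka t = be t"
proof -
  have "ga t * ka t = be t * (la t * ga t)" by (simp add: ka_def algebra_simps)
  thus ?thesis using la_ga by simp
qed

lemma be_lt1: "be t < 1" using sum1 al_pos ga_pos by linarith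

lemma inv1be: "1 / (1 - be t) \<le> gam"
proof -
  have "ga t \<le> 1 - be t" using sum1 al_pos by linarith
  moreover have "1 / gam \<le> ga t" using s_ga gam_ge1 by (simp add: divide_le_eq mult.commute)
  ultimately have "1 / gam \<le> 1 - be t" by linarith
  thus ?thesis using be_lt1 gam_ge1 by (simp add: divide_le_eq mult.commute le_divide_eq)
qed

lemma al_ge: "(m - 1) / (2 * D0) \<le> al t"
proof -
  have "(m - 1) / 2 \<le> m - 1 - t" using t_le by simp
  hence "(m - 1) / 2 / D0 \<le> (m - 1 - t) / Dt t"
    using Dt_le Dt_pos D0_pos m1 by (intro frac_le) auto
  thus ?thesis by (simp add: al_def)
qed

lemma la_ge: "D0 / (2 * rho) \<le> la t"
proof -
  have "D0 / 2 / rho \<le> Dt t / rho" using Dt_ge rho_pos by (intro divide_right_mono) auto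
  thus ?thesis by (simp add: la_def)
qed

end

end


context sol
begin

definition phin :: "nat \<Rightarrow> 'v \<Rightarrow> real" where "phin n x = psi n (r x)"

definition Mt :: "real \<Rightarrow> nat \<Rightarrow> real" where
  "Mt t n = max 1 (C1 gam * Esum (phin n) (la t) (B (n\<^sup>2)) powr ga t * ct t powr (- be t))"

lemma Mt_ge1: "1 \<le> Mt t n" by (simp add: Mt_def)

lemma phin_01: "0 \<le> phin n x" "phin n x \<le> 1" by (simp_all add: phin_def psi_01)

lemma phin_supp: assumes "2 \<le> n" "phin n x \<noteq> 0" shows "x \<in> B (n\<^sup>2) \<and> nbrs mu x \<subseteq> B (n\<^sup>2)"
proof -
  have "\<not> n\<^sup>2 \<le> r x" using psi_zero[OF assms(1)] assms(2) by (auto simp: phin_def)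
  hence "r x \<le> n\<^sup>2 - 1" by simp
  hence "nbrs mu x \<subseteq> B (Suc (n\<^sup>2 - 1))" by (rule nbrs_sub_B)
  moreover have "Suc (n\<^sup>2 - 1) = n\<^sup>2" using assms by (simp add: Suc_diff_1)
  ultimately show ?thesis using \<open>\<not> n\<^sup>2 \<le> r x\<close> by (simp add: B_mem)
qed

lemma phin_one: "2 \<le> n \<Longrightarrow> r x \<le> n \<Longrightarrow> phin n x = 1" by (simp add: phin_def psi_one)

lemma phin_ann: assumes "2 \<le> n" "adj mu x y" "phin n y < phin n x"
  shows "x \<in> {x \<in> B (n\<^sup>2). n \<le> r x}"
proof -
  have "phin n y < 1" using assms phin_01[of n x] by simp
  hence "n < r y" using phin_one[OF assms(1), of y] by (cases "r y \<le> n") auto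
  moreover have "r y \<le> Suc (r x)" using r_adj[OF assms(2)] .
  ultimately have "n \<le> r x" by simp
  moreover have "phin n x \<noteq> 0" using assms phin_01[of n y] by simp
  ultimately show ?thesis using phin_supp[OF assms(1)] by simp
qed

lemma KLn:
  assumes n: "2 \<le> n" and t: "0 < t" "t \<le> t0" and X: "X \<subseteq> B (n\<^sup>2)"
    and Xcov: "\<And>x y. adj mu x y \<Longrightarrow> phin n y < phin n x \<Longrightarrow> x \<in> X"
  shows "Asum t gam (phin n) (B (n\<^sup>2)) \<le> (Mt t n * Asum t gam (phin n) X powr al t) powr (1 / (1 - be t))"
proof -
  have t1: "t \<le> 1" using t_le[OF t] by simp
  have "Asum t gam (phin n) (B (n\<^sup>2)) \<le> (C1 gam * (Asum t gam (phin n) X powr al t * Esum (phin n) (la t) (B (n\<^sup>2)) powr ga t) * ct t powr (- be t)) powr (1 / (1 - be t))"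
  proof (rule KL[OF B_fin X])
    show "\<And>x. 0 \<le> phin n x" "\<And>x. phin n x \<le> 1" by (simp_all add: phin_01)
    show "\<And>x. phin n x \<noteq> 0 \<Longrightarrow> x \<in> B (n\<^sup>2) \<and> nbrs mu x \<subseteq> B (n\<^sup>2)" using phin_supp[OF n] by blast
    show "\<And>x y. adj mu x y \<Longrightarrow> phin n y < phin n x \<Longrightarrow> x \<in> X" by (rule Xcov)
    show "0 < t" "t \<le> 1" using t t1 by auto
    show "1 \<le> gam" by (rule gam_ge1)
    show "0 < al t" "0 < be t" "0 < ga t" "al t + be t + ga t = 1"
      "p * al t - t * al t - (1 + t) * be t = - t" "q * al t + m * be t = m - 1" "1 \<le> gam * ga t" "la t * ga t = 1"
      using al_pos[OF t] be_pos[OF t] ga_pos[OF t] sum1[OF t] id_u[OF t] id_g[OF t] s_ga[OF t] la_ga[OF t] by auto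
  qed
  also have "\<dots> \<le> (Mt t n * Asum t gam (phin n) X powr al t) powr (1 / (1 - be t))"
  proof (intro powr_mono2)
    show "0 \<le> 1 / (1 - be t)" using be_lt1[OF t] by simp
    show "0 \<le> C1 gam * (Asum t gam (phin n) X powr al t * Esum (phin n) (la t) (B (n\<^sup>2)) powr ga t) * ct t powr (- be t)"
      using K_pos p0 gam_ge1 by (simp add: C1_def)
    have "C1 gam * (Asum t gam (phin n) X powr al t * Esum (phin n) (la t) (B (n\<^sup>2)) powr ga t) * ct t powr (- be t)
      = (C1 gam * Esum (phin n) (la t) (B (n\<^sup>2)) powr ga t * ct t powr (- be t)) * Asum t gam (phin n) X powr al t"
      by (simp add: algebra_simps)
    also have "\<dots> \<le> Mt t n * Asum t gam (phin n) X powr al t"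
      by (intro mult_right_mono) (auto simp: Mt_def)
    finally show "C1 gam * (Asum t gam (phin n) X powr al t * Esum (phin n) (la t) (B (n\<^sup>2)) powr ga t) * ct t powr (- be t)
      \<le> Mt t n * Asum t gam (phin n) X powr al t" .
  qed
  finally show ?thesis .
qed

lemma C1gen:
  assumes n: "2 \<le> n" and t: "0 < t" "t \<le> t0"
  shows "Asum t gam (phin n) (B (n\<^sup>2)) \<le> Mt t n powr gam"
proof -
  define A where "A = Asum t gam (phin n) (B (n\<^sup>2))"
  define M where "M = Mt t n"
  have M1: "1 \<le> M" by (simp add: M_def Mt_ge1)
  have ineq: "A \<le> (M * A powr al t) powr (1 / (1 - be t))"
  proof -
    have cov: "\<And>x y. adj mu x y \<Longrightarrow> phin n y < phin n x \<Longrightarrow> x \<in> B (n\<^sup>2)"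
      using phin_ann[OF n] by blast
    show ?thesis unfolding A_def M_def by (rule KLn[OF n t order_refl cov])
  qed
  show ?thesis
  proof (cases "A = 0")
    case True thus ?thesis using M1 by (simp add: A_def M_def)
  next
    case False
    hence Ap: "0 < A" using Asum_nn[of t gam "phin n" "B (n\<^sup>2)"] by (simp add: A_def)
    define e where "e = 1 / (1 - be t)"
    have ep: "0 < e" using be_lt1[OF t] by (simp add: e_def)
    have Xp: "0 < (M * A powr al t) powr e" using Ap M1 by simp
    have "ln A \<le> ln ((M * A powr al t) powr e)" using ineq Ap Xp unfolding e_def by (subst ln_le_cancel_iff) auto
    also have "\<dots> = e * (ln M + al t * ln A)" using Ap M1 by (simp add: ln_powr ln_mult)
    finally have L: "ln A \<le> e * (ln M + al t * ln A)" .
    have L': "ln A \<le> (ln M + al t * ln A) / (1 - be t)" using L by (simp add: e_def)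
    have "ln A * (1 - be t) \<le> ln M + al t * ln A"
      using L' be_lt1[OF t] by (simp add: pos_le_divide_eq)
    moreover have "ln A * ga t = ln A * (1 - be t) - al t * ln A"
    proof -
      have g: "ga t = (1 - be t) - al t" using sum1[OF t] by linarith
      show ?thesis unfolding g by (simp add: algebra_simps)
    qed
    ultimately have "ln A * ga t \<le> ln M" by linarith
    hence "ln A * ga t * la t \<le> ln M * la t" using la_pos[OF t] by (simp add: mult_right_mono)
    moreover have "ln A * ga t * la t = ln A" using la_ga[OF t] by (simp add: mult.assoc mult.commute)
    ultimately have "ln A \<le> ln M * la t" by simp
    also have "\<dots> \<le> ln M * gam" using la_le[OF t] M1 by (intro mult_left_mono) auto
    finally have "ln A \<le> gam * ln M" by (simp add: mult.commute)
    hence "exp (ln A) \<le> exp (gam * ln M)" by simp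
    hence "A \<le> exp (gam * ln M)" using Ap by simp
    thus ?thesis using M1 by (simp add: A_def M_def powr_def)
  qed
qed

lemma C2gen:
  assumes n: "2 \<le> n" and t: "0 < t" "t \<le> t0"
  shows "Asum t gam (phin n) (B (n\<^sup>2))
    \<le> Mt t n powr gam * Asum t gam (phin n) {x \<in> B (n\<^sup>2). n \<le> r x} powr (al t / (1 - be t))"
proof -
  define AX where "AX = Asum t gam (phin n) {x \<in> B (n\<^sup>2). n \<le> r x}"
  have "Asum t gam (phin n) (B (n\<^sup>2)) \<le> (Mt t n * AX powr al t) powr (1 / (1 - be t))"
    unfolding AX_def using phin_ann[OF n] by (intro KLn[OF n t]) auto
  also have "\<dots> = Mt t n powr (1 / (1 - be t)) * AX powr (al t / (1 - be t))"
    using Mt_ge1[of t n] Asum_nn by (simp add: powr_mult powr_powr)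
  also have "\<dots> \<le> Mt t n powr gam * AX powr (al t / (1 - be t))"
    using inv1be[OF t] Mt_ge1[of t n] by (intro mult_right_mono powr_mono) auto
  finally show ?thesis by (simp add: AX_def)
qed

end


lemma powr_le_max: fixes x e :: real assumes "0 \<le> x" "0 < e" "e \<le> 1" shows "x powr e \<le> max 1 x"
proof (cases "x \<le> 1")
  case True thus ?thesis using powr_le1[of e x] assms by simp
next
  case False
  hence "x powr e \<le> x powr 1" using assms by (intro powr_mono) auto
  thus ?thesis using False by simp
qed

context sol
begin

lemma Esum_rad:
  assumes n: "2 \<le> n" and lam: "0 < lam"
  shows "Esum (phin n) lam (B N) \<le> (\<Sum>k\<in>{..N}. wl k * (psi n k - psi n (Suc k)) powr lam)"
  unfolding Esum_def phin_def using radial_E[of "psi n" lam N] psi_mono[OF n] lam by simp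

lemma Esum_crude:
  assumes n: "2 \<le> n" and lam: "0 < lam"
  shows "Esum (phin n) lam (B (n\<^sup>2)) \<le> W mu x0 (n\<^sup>2)"
proof -
  have "Esum (phin n) lam (B (n\<^sup>2)) \<le> (\<Sum>k\<in>{..n\<^sup>2}. wl k * (psi n k - psi n (Suc k)) powr lam)"
    by (rule Esum_rad[OF n lam])
  also have "\<dots> \<le> (\<Sum>k\<in>{..n\<^sup>2}. wl k * 1)"
  proof (intro sum_mono mult_left_mono wl_nn)
    fix k
    have "0 \<le> psi n k - psi n (Suc k)" "psi n k - psi n (Suc k) \<le> 1"
      using psi_diff_nn[OF n, of k] psi_01[of n k] psi_01[of n "Suc k"] by auto
    thus "(psi n k - psi n (Suc k)) powr lam \<le> 1" using lam by (intro powr_le1) auto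
  qed
  also have "\<dots> = W mu x0 (n\<^sup>2)" by (simp add: W_levels)
  finally show ?thesis .
qed

end

locale solW = sol mu x0 m p q p0 u for mu :: "'v \<Rightarrow> 'v \<Rightarrow> real" and x0 m p q p0 u +
  fixes Cw :: real and n1 :: nat
  assumes Cw_pos: "0 < Cw"
    and Wb: "\<And>n. n1 \<le> n \<Longrightarrow> W mu x0 n \<le> Cw * real n powr gam * ln (real n) powr del"
begin

definition "Cfix = Cw * exp (2 * ((m - q) / rho)) * 2 powr del * (1 + 2 * gam) * exp (1 / rho)"
definition "Cb = max 1 (C1 gam * max 1 Cfix * (2 * K\<^sup>2 * p0))"

lemma Mt_crit:
  assumes n: "3 \<le> n" "n1 \<le> n" and tt: "1 / ln (real n) \<le> t0"
  shows "Mt (1 / ln (real n)) n \<le> Cb"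
proof -
  define L where "L = ln (real n)"
  define t where "t = 1 / L"
  have L1: "1 \<le> L"
  proof -
    have "(3::real) \<le> real n" using n by simp
    hence en: "exp 1 \<le> real n" using exp_le by linarith
    have "ln (exp 1) \<le> ln (real n)" using en n by (subst ln_le_cancel_iff) auto
    thus ?thesis unfolding L_def by simp
  qed
  have Lp: "0 < L" using L1 by simp
  have t: "0 < t" "t \<le> t0" using tt Lp by (auto simp: t_def L_def)
  have tL: "t * L = 1" using Lp by (simp add: t_def)
  define E where "E = Esum (phin n) (la t) (B (n\<^sup>2))"
  have E_nn: "0 \<le> E" by (simp add: E_def Esum_nn)
  define a where "a = (m - q) / rho"
  have ga_eq: "(gam - la t) * ln (real n) = a"
    using gam_la[OF t] tL by (simp add: a_def L_def algebra_simps)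
  have E_le: "E \<le> L powr (- la t) * (Cw * exp (2 * a) * 2 powr del * L powr del) * (1 + 2 * la t * L)"
  proof -
    have "E \<le> (\<Sum>k\<in>{..n\<^sup>2}. wl k * (psi n k - psi n (Suc k)) powr la t)"
      unfolding E_def using n la_pos[OF t] by (intro Esum_rad) auto
    also have "\<dots> \<le> L powr (- la t) * (Cw * exp (2 * a) * 2 powr del * L powr del) * (1 + 2 * la t * L)"
      unfolding L_def
      by (rule E_crit[OF n Cw_pos Wb la_pos[OF t] ga_eq]) (use la_le[OF t] del_nn in auto)
    finally show ?thesis .
  qed
  define Q where "Q = Cw * exp (2 * a) * 2 powr del * L powr del"
  have Q_nn: "0 \<le> Q" using Cw_pos by (simp add: Q_def)
  have EL: "E * L powr ka t \<le> Cfix"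
  proof -
    have P1: "E * L powr ka t \<le> (L powr (- la t) * Q * (1 + 2 * la t * L)) * L powr ka t"
      using E_le by (intro mult_right_mono) (auto simp: Q_def)
    have "2 * la t * L \<le> 2 * gam * L" using la_le[OF t] L1 by (intro mult_right_mono) auto
    moreover have "(1 + 2 * gam) * L = L + 2 * gam * L" by (simp add: algebra_simps)
    ultimately have P2: "1 + 2 * la t * L \<le> (1 + 2 * gam) * L" using L1 by linarith
    have P3: "(L powr (- la t) * Q * (1 + 2 * la t * L)) * L powr ka t \<le> (L powr (- la t) * Q * ((1 + 2 * gam) * L)) * L powr ka t"
      using P2 Q_nn by (intro mult_right_mono mult_left_mono) auto
    have P4: "L powr (ka t - la t + del + 1) = L powr ka t * L powr (- la t) * L powr del * L"
    proof -
      have "L powr (ka t - la t + del + 1) = L powr ka t * L powr (- la t) * L powr del * L powr 1"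
        by (simp only: diff_conv_add_uminus powr_add)
      thus ?thesis using Lp by simp
    qed
    have P5: "(L powr (- la t) * Q * ((1 + 2 * gam) * L)) * L powr ka t
        = (Cw * exp (2 * a) * 2 powr del * (1 + 2 * gam)) * L powr (ka t - la t + del + 1)"
      unfolding P4 Q_def by (simp add: algebra_simps)
    have P6: "L powr (ka t - la t + del + 1) \<le> exp (1 / rho)"
    proof -
      have "ln L \<le> L" using Lp by (rule ln_bound)
      hence "t * ln L \<le> t * L" using t by (intro mult_left_mono) auto
      hence "t * ln L \<le> 1" using tL by simp
      hence "t / rho * ln L \<le> 1 / rho" using rho_pos by (simp add: divide_right_mono)
      hence "L powr (t / rho) \<le> exp (1 / rho)" using Lp by (simp add: powr_def)
      thus ?thesis by (simp add: ka_exp[OF t])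
    qed
    have P7: "(Cw * exp (2 * a) * 2 powr del * (1 + 2 * gam)) * L powr (ka t - la t + del + 1)
        \<le> (Cw * exp (2 * a) * 2 powr del * (1 + 2 * gam)) * exp (1 / rho)"
      using P6 Cw_pos gam_ge1 by (intro mult_left_mono) auto
    have "E * L powr ka t \<le> (Cw * exp (2 * a) * 2 powr del * (1 + 2 * gam)) * exp (1 / rho)"
      using P1 P3 P5 P7 by linarith
    thus ?thesis by (simp add: Cfix_def a_def)
  qed
  define c where "c = 2 * K\<^sup>2 * p0"
  have cp: "0 < c" using K_pos p0 by (simp add: c_def)
  have ct_eq: "ct t powr (- be t) = L powr be t * c powr be t"
  proof -
    have "ct t = inverse (L * c)" by (simp add: ct_def t_def c_def field_simps)
    hence "ct t powr (- be t) = (L * c) powr be t" using Lp cp by (simp add: powr_def ln_inverse ln_mult algebra_simps)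
    thus ?thesis using Lp cp by (simp add: powr_mult)
  qed
  have "(E * L powr ka t) powr ga t = E powr ga t * (L powr ka t) powr ga t"
    using E_nn by (simp add: powr_mult)
  also have "(L powr ka t) powr ga t = L powr be t"
    using ga_ka[OF t] by (simp add: powr_powr mult.commute)
  finally have e1: "E powr ga t * L powr be t = (E * L powr ka t) powr ga t" by simp
  have "(E * L powr ka t) powr ga t \<le> max 1 (E * L powr ka t)"
    using ga_pos[OF t] sum1[OF t] al_pos[OF t] be_pos[OF t] E_nn by (intro powr_le_max) auto
  also have "\<dots> \<le> max 1 Cfix" using EL by simp
  finally have 1: "E powr ga t * L powr be t \<le> max 1 Cfix" using e1 by simp
  have 2: "c powr be t \<le> c"
  proof -
    have "1 \<le> K\<^sup>2" using K_ge1 by (simp add: one_le_power)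
    hence "1 * 1 \<le> K\<^sup>2 * p0" using p0 by (intro mult_mono) auto
    hence "1 \<le> c" by (simp add: c_def)
    thus ?thesis using be_lt1[OF t] be_pos[OF t] powr_mono[of "be t" 1 c] by simp
  qed
  have "C1 gam * E powr ga t * ct t powr (- be t) = C1 gam * (E powr ga t * L powr be t) * c powr be t"
    unfolding ct_eq by (simp add: algebra_simps)
  also have "\<dots> \<le> C1 gam * max 1 Cfix * c"
    using 1 2 K_pos p0 gam_ge1 by (intro mult_mono mult_left_mono) (auto simp: C1_def)
  finally have "C1 gam * E powr ga t * ct t powr (- be t) \<le> C1 gam * max 1 Cfix * c" .
  hence "Mt t n \<le> Cb" unfolding Mt_def Cb_def E_def[symmetric] c_def[symmetric] by simp
  thus ?thesis by (simp add: t_def L_def)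
qed

end


lemma u_split:
  fixes y t t1 \<theta> :: real
  assumes "0 < y" "0 < t" "t \<le> t1" "0 < \<theta>"
  shows "y powr (-t) \<le> \<theta> powr (-t) + \<theta> powr (t1 - t) * y powr (-t1)"
proof (cases "\<theta> \<le> y")
  case True
  hence "y powr (-t) \<le> \<theta> powr (-t)" using assms by (intro powr_mono2') auto
  moreover have "0 \<le> \<theta> powr (t1 - t) * y powr (-t1)" by simp
  ultimately show ?thesis by linarith
next
  case False
  have "y powr (-t) = y powr (-t1) * y powr (t1 - t)" using assms by (simp add: powr_add[symmetric])
  also have "\<dots> \<le> y powr (-t1) * \<theta> powr (t1 - t)"
    using False assms by (intro mult_left_mono powr_mono2) auto
  finally show ?thesis by (simp add: mult.commute) (smt (verit) powr_ge_zero)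
qed

context solW
begin

definition "C3 = max 1 (C1 gam * max 1 Cw * ct t0 powr (- be t0))"

lemma C3_ge1: "1 \<le> C3" by (simp add: C3_def)

lemma Mt_crude:
  assumes N: "2 \<le> N" "n1 \<le> N\<^sup>2"
  shows "Mt t0 N \<le> C3 * real (N\<^sup>2) powr (gam + del)"
proof -
  have t: "0 < t0" "t0 \<le> t0" using t0_pos by auto
  define X where "X = real (N\<^sup>2) powr (gam + del)"
  have N2: "1 \<le> real (N\<^sup>2)" using N by simp
  have X1: "1 \<le> X" unfolding X_def using N2 gam_ge1 del_nn by (intro ge_one_powr_ge_zero) auto
  define E where "E = Esum (phin N) (la t0) (B (N\<^sup>2))"
  have E_nn: "0 \<le> E" by (simp add: E_def Esum_nn)
  have "E \<le> W mu x0 (N\<^sup>2)" unfolding E_def using N la_pos[OF t] by (intro Esum_crude) auto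
  also have "\<dots> \<le> Cw * real (N\<^sup>2) powr gam * ln (real (N\<^sup>2)) powr del" using Wb[OF N(2)] by simp
  also have "\<dots> \<le> Cw * real (N\<^sup>2) powr gam * real (N\<^sup>2) powr del"
  proof -
    have "ln (real (N\<^sup>2)) powr del \<le> real (N\<^sup>2) powr del"
      using N2 N del_nn ln_bound[of "real (N\<^sup>2)"] by (intro powr_mono2) auto
    thus ?thesis using Cw_pos by (intro mult_left_mono) auto
  qed
  also have "\<dots> = Cw * X" using N2 by (simp add: X_def powr_add)
  finally have EX: "E \<le> Cw * X" .
  have "E powr ga t0 \<le> max 1 E"
    using ga_pos[OF t] sum1[OF t] al_pos[OF t] be_pos[OF t] E_nn by (intro powr_le_max) auto
  also have "\<dots> \<le> max 1 (Cw * X)" using EX by simp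
  also have "\<dots> \<le> max 1 Cw * X" using X1 Cw_pos
    by (simp add: max_def) (smt (verit) mult_le_cancel_left2 mult_le_cancel_right1)
  finally have EP: "E powr ga t0 \<le> max 1 Cw * X" .
  have "C1 gam * E powr ga t0 * ct t0 powr (- be t0) \<le> C1 gam * (max 1 Cw * X) * ct t0 powr (- be t0)"
    using EP K_pos p0 gam_ge1 by (intro mult_right_mono mult_left_mono) (auto simp: C1_def)
  also have "\<dots> = (C1 gam * max 1 Cw * ct t0 powr (- be t0)) * X" by (simp add: algebra_simps)
  also have "\<dots> \<le> C3 * X" using X1 by (intro mult_right_mono) (auto simp: C3_def)
  finally have "C1 gam * E powr ga t0 * ct t0 powr (- be t0) \<le> C3 * X" .
  moreover have "1 \<le> C3 * X" using C3_ge1 X1 by (metis mult_mono' le_numeral_extra(1) mult_1 zero_le_one order_trans)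
  ultimately show ?thesis by (simp add: Mt_def E_def[symmetric] X_def)
qed

end


context solW
begin

lemma mv_nn: "0 \<le> vmeasure mu x" using mv_pos[of x] by simp
lemma u_ne: "u x \<noteq> 0" using u_pos[of x] by simp

definition tn :: "nat \<Rightarrow> real" where "tn n = 1 / ln (real n)"
definition S :: "nat \<Rightarrow> real" where "S k = (\<Sum>x\<in>B k. vmeasure mu x * f x)"
definition Xn :: "nat \<Rightarrow> 'v set" where "Xn n = {x \<in> B (n\<^sup>2). n \<le> r x}"
definition T :: "nat \<Rightarrow> real" where "T n = (\<Sum>x\<in>Xn n. vmeasure mu x * f x)"
definition AXn :: "nat \<Rightarrow> real" where "AXn n = Asum (tn n) gam (phin n) (Xn n)"

definition good :: "nat \<Rightarrow> bool" where "good n \<longleftrightarrow> 3 \<le> n \<and> n1 \<le> n \<and> 0 < tn n \<and> tn n \<le> t0"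

lemma tn_lim: "tn \<longlonglongrightarrow> 0"
proof -
  have "filterlim (\<lambda>n. ln (real n)) at_top sequentially"
    by (rule filterlim_compose[OF ln_at_top filterlim_real_sequentially])
  hence "(\<lambda>n. inverse (ln (real n))) \<longlonglongrightarrow> 0" by (rule tendsto_inverse_0_at_top)
  thus ?thesis by (simp add: tn_def[abs_def] divide_inverse)
qed

lemma ev_good: "eventually good sequentially"
proof -
  have 1: "eventually (\<lambda>n. tn n < t0) sequentially" using tn_lim t0_pos by (rule order_tendstoD(2))
  have 2: "eventually (\<lambda>n. max 3 n1 \<le> n) sequentially" by (rule eventually_ge_at_top)
  show ?thesis
  proof (rule eventually_mono[OF eventually_conj[OF 1 2]])
    fix n assume "tn n < t0 \<and> max 3 n1 \<le> n"
    moreover hence "0 < tn n" by (simp add: tn_def)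
    ultimately show "good n" by (simp add: good_def)
  qed
qed

lemma good_props: assumes "good n" shows "3 \<le> n" "n1 \<le> n" "0 < tn n" "tn n \<le> t0" "2 \<le> n"
  using assms by (auto simp: good_def)

lemma Asum_ge_single:
  assumes n: "2 \<le> n" and z: "r z \<le> n" and t: "0 < t"
  shows "vmeasure mu z * f z * u z powr (-t) \<le> Asum t gam (phin n) (B (n\<^sup>2))"
proof -
  have zB: "z \<in> B (n\<^sup>2)" using z n by (simp add: B_mem) (metis le_trans power2_nat_le_imp_le le_square power2_eq_square)
  have "vmeasure mu z * f z * u z powr (-t) = vmeasure mu z * f z * u z powr (-t) * phin n z powr gam"
    using phin_one[OF n z] by simp
  also have "\<dots> \<le> Asum t gam (phin n) (B (n\<^sup>2))"
    unfolding Asum_def using zB B_fin mv_pos f_nn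
    by (intro member_le_sum[where f="\<lambda>x. vmeasure mu x * f x * u x powr (-t) * phin n x powr gam"])
       (auto intro!: mult_nonneg_nonneg simp: mv_nn f_nn)
  finally show ?thesis .
qed

lemma S_bound: "S k \<le> Cb powr gam"
proof -
  have lim: "(\<lambda>n. \<Sum>x\<in>B k. vmeasure mu x * f x * u x powr (- tn n)) \<longlonglongrightarrow> S k"
  proof -
    have "(\<lambda>n. \<Sum>x\<in>B k. vmeasure mu x * f x * u x powr (- tn n)) \<longlonglongrightarrow> (\<Sum>x\<in>B k. vmeasure mu x * f x * u x powr (- 0))"
      by (intro tendsto_sum tendsto_mult_left tendsto_powr tendsto_const tendsto_minus tn_lim) (simp add: u_pos less_imp_neq[symmetric])
    thus ?thesis by (simp add: S_def u_ne)
  qed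
  have ev: "eventually (\<lambda>n. (\<Sum>x\<in>B k. vmeasure mu x * f x * u x powr (- tn n)) \<le> Cb powr gam) sequentially"
  proof (rule eventually_mono[OF eventually_conj[OF ev_good eventually_ge_at_top[of k]]])
    fix n assume a: "good n \<and> k \<le> n"
    note g = good_props[OF conjunct1[OF a]]
    have kn: "k \<le> n" using a by simp
    have sub: "B k \<subseteq> B (n\<^sup>2)"
    proof (rule B_mono)
      show "k \<le> n\<^sup>2" using kn by (simp add: power2_eq_square) (metis le_trans le_square)
    qed
    have "(\<Sum>x\<in>B k. vmeasure mu x * f x * u x powr (- tn n)) = (\<Sum>x\<in>B k. vmeasure mu x * f x * u x powr (- tn n) * phin n x powr gam)"
      using phin_one[OF g(5)] kn by (intro sum.cong refl) (auto simp: B_mem)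
    also have "\<dots> \<le> Asum (tn n) gam (phin n) (B (n\<^sup>2))"
      unfolding Asum_def using sub B_fin mv_pos f_nn
      by (intro sum_mono2) (auto intro!: mult_nonneg_nonneg simp: mv_nn f_nn)
    also have "\<dots> \<le> Mt (tn n) n powr gam" using C1gen[OF g(5) g(3) g(4)] .
    also have "\<dots> \<le> Cb powr gam"
      using Mt_crit[OF g(1) g(2)] g(4) Mt_ge1[of "tn n" n] gam_ge1 by (intro powr_mono2) (auto simp: tn_def)
    finally show "(\<Sum>x\<in>B k. vmeasure mu x * f x * u x powr (- tn n)) \<le> Cb powr gam" .
  qed
  show ?thesis by (rule tendsto_le[OF trivial_limit_sequentially tendsto_const lim ev])
qed

lemma S_mono: "incseq S"
  unfolding incseq_def S_def
proof (intro allI impI)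
  fix i j :: nat assume "i \<le> j"
  thus "(\<Sum>x\<in>B i. vmeasure mu x * f x) \<le> (\<Sum>x\<in>B j. vmeasure mu x * f x)"
    using B_fin B_mono mv_pos f_nn by (intro sum_mono2) (auto intro!: mult_nonneg_nonneg simp: mv_nn f_nn)
qed

lemma T_lim: "T \<longlonglongrightarrow> 0"
proof -
  have bdd: "bdd_above (range S)" using S_bound by (auto intro!: bdd_aboveI)
  define L where "L = (SUP i. S i)"
  have SL: "S \<longlonglongrightarrow> L" unfolding L_def by (rule LIMSEQ_incseq_SUP[OF bdd S_mono])
  have sm: "strict_mono (\<lambda>n::nat. n\<^sup>2)" by (auto simp: strict_mono_def power_strict_mono)
  have 1: "(\<lambda>n. S (n\<^sup>2)) \<longlonglongrightarrow> L" using LIMSEQ_subseq_LIMSEQ[OF SL sm] by (simp add: o_def)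
  have 2: "(\<lambda>n. S (n - 1)) \<longlonglongrightarrow> L" by (rule filterlim_compose[OF SL filterlim_minus_const_nat_at_top])
  have 3: "(\<lambda>n. S (n\<^sup>2) - S (n - 1)) \<longlonglongrightarrow> 0" using tendsto_diff[OF 1 2] by simp
  have ev: "eventually (\<lambda>n. S (n\<^sup>2) - S (n - 1) = T n) sequentially"
  proof (rule eventually_mono[OF eventually_ge_at_top[of 1]])
    fix n :: nat assume n: "1 \<le> n"
    have sub: "B (n - 1) \<subseteq> B (n\<^sup>2)" by (rule B_mono) (simp add: power2_eq_square, metis le_trans diff_le_self le_square)
    have "Xn n = B (n\<^sup>2) - B (n - 1)" using n by (auto simp: Xn_def B_mem)
    thus "S (n\<^sup>2) - S (n - 1) = T n" using sum_diff[OF B_fin sub, of "\<lambda>x. vmeasure mu x * f x"] by (simp add: T_def S_def)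
  qed
  show ?thesis using 3 ev by (rule Lim_transform_eventually)
qed

end


context solW
begin

definition "ee = 4 * (gam + del) * gam"
definition "GG = exp ((ee + 1) / t0)"

lemma AX_bound:
  assumes g: "good n"
  shows "AXn n \<le> GG * T n + GG * C3 powr gam * (1 / real n)"
proof -
  note gp = good_props[OF g]
  define t where "t = tn n"
  have t: "0 < t" "t \<le> t0" using gp by (auto simp: t_def)
  have lnp: "0 < ln (real n)" using gp by simp
  have tL: "t * ln (real n) = 1" using lnp by (simp add: t_def tn_def)
  have np: "0 < real n" using gp by simp
  define \<theta> where "\<theta> = real n powr (- (ee + 1) / t0)"
  have thp: "0 < \<theta>" using np by (simp add: \<theta>_def)
  have th1: "\<theta> powr (- t) = GG"
  proof -
    have "\<theta> powr (- t) = exp (- t * (- (ee + 1) / t0 * ln (real n)))" using np thp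
      by (simp add: \<theta>_def powr_def)
    also have "- t * (- (ee + 1) / t0 * ln (real n)) = (ee + 1) / t0 * (t * ln (real n))" by (simp add: algebra_simps)
    also have "\<dots> = (ee + 1) / t0" using tL by simp
    finally show ?thesis by (simp add: GG_def)
  qed
  have th2: "\<theta> powr (t0 - t) = GG * real n powr (- (ee + 1))"
  proof -
    have "\<theta> powr (t0 - t) = \<theta> powr (- t) * \<theta> powr t0" by (simp add: powr_add[symmetric])
    also have "\<theta> powr t0 = real n powr (- (ee + 1))" using np t0_pos by (simp add: \<theta>_def powr_powr)
    finally show ?thesis using th1 by simp
  qed
  define P where "P = Asum t0 gam (phin (n\<^sup>2)) (B ((n\<^sup>2)\<^sup>2))"
  have n2: "2 \<le> n\<^sup>2" using gp(5) by (simp add: power2_eq_square) (metis le_trans le_square)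
  have nn1: "n1 \<le> (n\<^sup>2)\<^sup>2" using gp by (simp add: power2_eq_square) (metis le_trans le_square)
  have PB: "P \<le> C3 powr gam * real n powr ee"
  proof -
    have "P \<le> Mt t0 (n\<^sup>2) powr gam" unfolding P_def using C1gen[OF n2 t0_pos order_refl] .
    also have "\<dots> \<le> (C3 * real ((n\<^sup>2)\<^sup>2) powr (gam + del)) powr gam"
      using Mt_crude[OF n2 nn1] Mt_ge1[of t0 "n\<^sup>2"] gam_ge1 by (intro powr_mono2) auto
    also have "\<dots> = C3 powr gam * real n powr ee"
    proof -
      have e4: "real n powr 4 = real n ^ 4" using np by (intro powr_numeral) simp
      have "real ((n\<^sup>2)\<^sup>2) = real n ^ 4" by simp
      hence "real ((n\<^sup>2)\<^sup>2) = real n powr 4" using e4 by simp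
      hence "real ((n\<^sup>2)\<^sup>2) powr (gam + del) = real n powr (4 * (gam + del))" using np by (simp only: powr_powr)
      hence "(C3 * real ((n\<^sup>2)\<^sup>2) powr (gam + del)) powr gam = C3 powr gam * (real n powr (4 * (gam + del))) powr gam"
        using C3_ge1 by (simp add: powr_mult)
      also have "(real n powr (4 * (gam + del))) powr gam = real n powr ee" by (simp add: powr_powr ee_def)
      finally show ?thesis .
    qed
    finally show ?thesis .
  qed
  have "AXn n = (\<Sum>x\<in>Xn n. vmeasure mu x * f x * u x powr (- t) * phin n x powr gam)"
    by (simp add: AXn_def Asum_def t_def)
  also have "\<dots> \<le> (\<Sum>x\<in>Xn n. GG * (vmeasure mu x * f x) + GG * real n powr (- (ee + 1)) * (vmeasure mu x * f x * u x powr (- t0) * phin (n\<^sup>2) x powr gam))"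
  proof (intro sum_mono)
    fix x assume x: "x \<in> Xn n"
    have rx: "r x \<le> n\<^sup>2" using x by (simp add: Xn_def B_mem)
    have "phin n x powr gam \<le> 1" using phin_01[of n x] gam_ge1 by (intro powr_le1) auto
    hence "vmeasure mu x * f x * u x powr (- t) * phin n x powr gam \<le> vmeasure mu x * f x * u x powr (- t) * 1"
      using mv_nn f_nn by (intro mult_left_mono mult_nonneg_nonneg) auto
    also have "\<dots> \<le> vmeasure mu x * f x * (\<theta> powr (- t) + \<theta> powr (t0 - t) * u x powr (- t0))"
      using u_split[OF u_pos t thp, of x] mv_nn[of x] f_nn[of x] by (simp add: mult_left_mono)
    also have "\<dots> = GG * (vmeasure mu x * f x) + GG * real n powr (- (ee + 1)) * (vmeasure mu x * f x * u x powr (- t0) * phin (n\<^sup>2) x powr gam)"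
      using phin_one[OF n2 rx] unfolding th1 th2 by (simp add: algebra_simps)
    finally show "vmeasure mu x * f x * u x powr (- t) * phin n x powr gam \<le> GG * (vmeasure mu x * f x) + GG * real n powr (- (ee + 1)) * (vmeasure mu x * f x * u x powr (- t0) * phin (n\<^sup>2) x powr gam)" .
  qed
  also have "\<dots> = GG * T n + GG * real n powr (- (ee + 1)) * (\<Sum>x\<in>Xn n. vmeasure mu x * f x * u x powr (- t0) * phin (n\<^sup>2) x powr gam)"
    by (simp add: sum.distrib sum_distrib_left T_def)
  finally have A1: "AXn n \<le> GG * T n + GG * real n powr (- (ee + 1)) * (\<Sum>x\<in>Xn n. vmeasure mu x * f x * u x powr (- t0) * phin (n\<^sup>2) x powr gam)" .
  have A2: "(\<Sum>x\<in>Xn n. vmeasure mu x * f x * u x powr (- t0) * phin (n\<^sup>2) x powr gam) \<le> P"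
  proof -
    have "Xn n \<subseteq> B ((n\<^sup>2)\<^sup>2)" unfolding Xn_def using B_mono[of "n\<^sup>2" "(n\<^sup>2)\<^sup>2"]
      by (auto simp: power2_eq_square)
    thus ?thesis unfolding P_def Asum_def using B_fin mv_nn f_nn
      by (intro sum_mono2) (auto intro!: mult_nonneg_nonneg)
  qed
  have GGp: "0 < GG" by (simp add: GG_def)
  have A3: "GG * real n powr (- (ee + 1)) * (\<Sum>x\<in>Xn n. vmeasure mu x * f x * u x powr (- t0) * phin (n\<^sup>2) x powr gam)
      \<le> GG * real n powr (- (ee + 1)) * (C3 powr gam * real n powr ee)"
    using A2 PB GGp by (intro mult_left_mono) auto
  have A4: "real n powr (- (ee + 1)) * (C3 powr gam * real n powr ee) = C3 powr gam * (1 / real n)"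
  proof -
    have "real n powr (- (ee + 1)) * real n powr ee = real n powr (- 1)" using np by (simp add: powr_add[symmetric])
    hence h: "real n powr (- (ee + 1)) * real n powr ee = 1 / real n" using np by (simp add: powr_minus_divide)
    have "real n powr (- (ee + 1)) * (C3 powr gam * real n powr ee) = C3 powr gam * (real n powr (- (ee + 1)) * real n powr ee)"
      by (simp only: mult.left_commute)
    thus ?thesis unfolding h .
  qed
  have "GG * real n powr (- (ee + 1)) * (C3 powr gam * real n powr ee) = GG * C3 powr gam * (1 / real n)"
    using A4 by (simp add: mult.assoc)
  thus ?thesis using A1 A3 by linarith
qed

end


context solW
begin

lemma AX_lim: "AXn \<longlonglongrightarrow> 0"
proof (rule tendsto_sandwich)
  show "eventually (\<lambda>n. 0 \<le> AXn n) sequentially" by (simp add: AXn_def Asum_nn)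
  show "eventually (\<lambda>n. AXn n \<le> GG * T n + GG * C3 powr gam * (1 / real n)) sequentially"
    using ev_good by (rule eventually_mono) (rule AX_bound)
  show "(\<lambda>n. 0) \<longlonglongrightarrow> 0" by simp
  have "(\<lambda>n. GG * T n + GG * C3 powr gam * (1 / real n)) \<longlonglongrightarrow> GG * 0 + GG * C3 powr gam * 0"
    by (intro tendsto_add tendsto_mult_left T_lim lim_1_over_n)
  thus "(\<lambda>n. GG * T n + GG * C3 powr gam * (1 / real n)) \<longlonglongrightarrow> 0" by simp
qed

lemma f_zero: "f z = 0"
proof -
  define almin where "almin = (m - 1) / (2 * D0)"
  have almp: "0 < almin" using m1 D0_pos by (simp add: almin_def)
  have ev1: "eventually (\<lambda>n. AXn n < 1) sequentially" using AX_lim by (rule order_tendstoD(2)) simp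
  have ev: "eventually (\<lambda>n. vmeasure mu z * f z * u z powr (- tn n) \<le> Cb powr gam * AXn n powr almin) sequentially"
  proof (rule eventually_mono[OF eventually_conj[OF ev_good eventually_conj[OF ev1 eventually_ge_at_top[of "r z"]]]])
    fix n assume a: "good n \<and> AXn n < 1 \<and> r z \<le> n"
    note g = good_props[OF conjunct1[OF a]]
    have t: "0 < tn n" "tn n \<le> t0" using g by auto
    have "vmeasure mu z * f z * u z powr (- tn n) \<le> Asum (tn n) gam (phin n) (B (n\<^sup>2))"
      using a g by (intro Asum_ge_single) auto
    also have "\<dots> \<le> Mt (tn n) n powr gam * AXn n powr (al (tn n) / (1 - be (tn n)))"
      using C2gen[OF g(5) t] by (simp add: AXn_def Xn_def)
    also have "\<dots> \<le> Cb powr gam * AXn n powr almin"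
    proof (intro mult_mono)
      show "Mt (tn n) n powr gam \<le> Cb powr gam"
        using Mt_crit[OF g(1) g(2)] t Mt_ge1[of "tn n" n] gam_ge1 by (intro powr_mono2) (auto simp: tn_def)
      have "almin \<le> al (tn n)" using al_ge[OF t] by (simp add: almin_def)
      also have "al (tn n) \<le> al (tn n) / (1 - be (tn n))"
        using al_pos[OF t] be_pos[OF t] be_lt1[OF t] by (simp add: le_divide_eq)
      finally have "almin \<le> al (tn n) / (1 - be (tn n))" .
      thus "AXn n powr (al (tn n) / (1 - be (tn n))) \<le> AXn n powr almin"
        using a by (intro powr_mono') (auto simp: AXn_def Asum_nn)
      show "0 \<le> Cb powr gam" by simp
      show "0 \<le> AXn n powr (al (tn n) / (1 - be (tn n)))" by simp
    qed
    finally show "vmeasure mu z * f z * u z powr (- tn n) \<le> Cb powr gam * AXn n powr almin" .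
  qed
  have lim1: "(\<lambda>n. vmeasure mu z * f z * u z powr (- tn n)) \<longlonglongrightarrow> vmeasure mu z * f z * u z powr (- 0)"
    by (intro tendsto_mult_left tendsto_powr tendsto_const tendsto_minus tn_lim) (simp add: u_ne)
  have lim2: "(\<lambda>n. Cb powr gam * AXn n powr almin) \<longlonglongrightarrow> Cb powr gam * 0"
    by (intro tendsto_mult_left tendsto_zero_powrI[OF AX_lim tendsto_const _ almp])
       (simp add: AXn_def Asum_nn)
  have "vmeasure mu z * f z * u z powr (- 0) \<le> Cb powr gam * 0"
    by (rule tendsto_le[OF trivial_limit_sequentially lim2 lim1 ev])
  hence "vmeasure mu z * f z \<le> 0" using u_pos[of z] by simp
  hence "f z \<le> 0" using mv_pos[of z] by (simp add: mult_le_0_iff)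
  thus ?thesis using f_nn[of z] by simp
qed

lemma contra: False using f_not_zero f_zero by blast

end

theorem theorem1p1:
  fixes mu :: "'v \<Rightarrow> 'v \<Rightarrow> real" and m p q :: real and x0 :: 'v
  assumes "weighted_graph mu"
    and "cond_p0 mu"
    and "m > 1"
    and "p \<ge> 0" and "m - 1 - p < q" and "q < m"
    and "\<exists>C::real. \<exists>n1::nat. C > 0 \<and> (\<forall>n::nat. n \<ge> n1 \<longrightarrow>
           W mu x0 n \<le> C * real n powr ((m * p + q) / (p + q - m + 1))
                        * ln (real n) powr ((m - 1) / (p + q - m + 1)))"
  shows "\<not> (\<exists>u. nontrivial_pos_solution mu m p q u)"
proof
  assume "\<exists>u. nontrivial_pos_solution mu m p q u"
  then obtain u where u: "nontrivial_pos_solution mu m p q u" by blast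
  obtain p0 where p0: "p0 > 1" "\<And>x y. adj mu x y \<Longrightarrow> mu x y / vmeasure mu x \<ge> 1 / p0"
    using assms(2) unfolding cond_p0_def by blast
  obtain C n1 where C: "C > 0" and Wh: "\<And>n. n \<ge> n1 \<Longrightarrow>
           W mu x0 n \<le> C * real n powr ((m * p + q) / (p + q - m + 1))
                        * ln (real n) powr ((m - 1) / (p + q - m + 1))"
    using assms(7) by blast
  interpret S0: sol mu x0 m p q p0 u
    by unfold_locales (use assms(1,3-6) p0 u in auto)
  interpret S: solW mu x0 m p q p0 u C n1
  proof unfold_locales
    show "0 < C" by (rule C)
    fix n assume "n1 \<le> n"
    thus "W mu x0 n \<le> C * real n powr S0.gam * ln (real n) powr S0.del"
      using Wh by (simp add: S0.gam_def S0.D0_def S0.rho_def S0.del_def)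
  qed
  show False by (rule S.contra)
qed


end
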